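(* Let $(w,d,N,L)$ be a stable Levi–Schubert quadruple with $w\ne(1,\dots,d)$. Then $(w,d,N,L)$ is multiplicity free if and only if its reduction $(\overline w,\overline d,\overline N,\overline L)$ is multiplicity free.
   Context: Work over $\mathbb{C}$. $G_{d,N}$ is the Grassmannian of $d$-planes in $\mathbb{C}^N$ with its Plücker embedding; $B\subset GL_N$ the upper triangular matrices. $I_{d,N}$ is the set of sequences $(i_1<\dots<i_d)$ in $\{1,\dots,N\}$; for $w=(\ell_1,\dots,\ell_d)\in I_{d,N}$, $X(w)$ is the closure of $B\cdot[e_{\ell_1}\wedge\dots\wedge e_{\ell_d}]$ in $G_{d,N}$ and $\mathbb{C}[X(w)]$ its homogeneous coordinate ring for the Plücker embedding. A (standard) Levi subgroup $L$ of $GL_N$ is given by $0=j_0<j_1<\dots<j_{b_L}=N$: the invertible block diagonal matrices with blocks of sizes $N_k=j_k-j_{k-1}$. A Levi–Schubert quadruple $(w,d,N,L)$ consists of $1\le d<N$, $w\in I_{d,N}$ and such an $L$; it is stable if $X(w)$ is stable under left multiplication by $L$, and then multiplicity free if every irreducible $L$-module occurs with multiplicity at most one in $\mathbb{C}[X(w)]$. Reduction: let $p\ge0$ be maximal with $\ell_i=i$ for $i\le p$; the reduction is $(\overline w,\overline d,\overline N,\overline L)$ with $\overline w=(\ell_{p+1}-p,\dots,\ell_d-p)$, $\overline d=d-p$, $\overline N=\ell_d-p$, and $\overline L\subseteq GL_{\overline N}$ the image of $L$ under taking the principal submatrix on rows and columns $p+1,\dots,\ell_d$. *)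

theory Defs
  imports Complex_Main "HOL-Combinatorics.Permutations"
begin

text \<open>Matrices are functions nat => nat => complex, indices 0-based, zero outside
the relevant range. A "frame" is an N x d matrix whose columns span a d-plane
(or less); its Pluecker coordinates are its d x d maximal minors.\<close>

type_synonym cmat = "nat \<Rightarrow> nat \<Rightarrow> complex"

definition mmult :: "nat \<Rightarrow> cmat \<Rightarrow> cmat \<Rightarrow> cmat" where
  "mmult n X Y = (\<lambda>i k. \<Sum>j<n. X i j * Y j k)"

definition idm :: "nat \<Rightarrow> cmat" where
  "idm n = (\<lambda>i k. if i = k \<and> i < n then 1 else 0)"

definition supported :: "nat \<Rightarrow> nat \<Rightarrow> cmat \<Rightarrow> bool" where
  "supported m n A \<longleftrightarrow> (\<forall>i k. (m \<le> i \<or> n \<le> k) \<longrightarrow> A i k = 0)"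

definition invertible_mat :: "nat \<Rightarrow> cmat \<Rightarrow> bool" where
  "invertible_mat n g \<longleftrightarrow> supported n n g \<and>
     (\<exists>h. supported n n h \<and> mmult n g h = idm n \<and> mmult n h g = idm n)"

definition borel :: "nat \<Rightarrow> cmat set" where
  "borel n = {b. invertible_mat n b \<and> (\<forall>i j. j < i \<longrightarrow> b i j = 0)}"

text \<open>I_{d,N} with 1-based entries (as in the paper).\<close>
definition Iseq :: "nat \<Rightarrow> nat \<Rightarrow> nat list set" where
  "Iseq d N = {w. length w = d \<and> sorted_wrt (<) w \<and> (\<forall>x\<in>set w. 1 \<le> x \<and> x \<le> N)}"

definition pluecker :: "nat list \<Rightarrow> cmat \<Rightarrow> complex" where
  "pluecker I A = (\<Sum>\<sigma> | \<sigma> permutes {..<length I}.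
      of_int (sign \<sigma>) * (\<Prod>r<length I. A (I ! r - 1) (\<sigma> r)))"

definition poly_fun :: "nat \<Rightarrow> nat \<Rightarrow> (cmat \<Rightarrow> complex) \<Rightarrow> bool" where
  "poly_fun d N F \<longleftrightarrow> (\<exists>xs :: (complex \<times> nat list list) list.
      (\<forall>(c, Is)\<in>set xs. \<forall>I\<in>set Is. I \<in> Iseq d N) \<and>
      F = (\<lambda>A. \<Sum>(c, Is)\<leftarrow>xs. c * (\<Prod>I\<leftarrow>Is. pluecker I A)))"

text \<open>Frames of the points of the orbit B.[e_{l_1} ^ ... ^ e_{l_d}]:
 columns b e_{l_1}, ..., b e_{l_d} with b in B.\<close>
definition orbit_frames :: "nat list \<Rightarrow> nat \<Rightarrow> nat \<Rightarrow> cmat set" where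
  "orbit_frames w d N = {A. \<exists>b\<in>borel N.
      A = (\<lambda>i k. if i < N \<and> k < d then b i (w ! k - 1) else 0)}"

text \<open>Frames whose Pluecker point lies in the affine cone over X(w), the Zariski closure
 of the orbit: they satisfy every Pluecker polynomial vanishing on the orbit.\<close>
definition schubert_frames :: "nat list \<Rightarrow> nat \<Rightarrow> nat \<Rightarrow> cmat set" where
  "schubert_frames w d N = {A. supported N d A \<and>
      (\<forall>F. poly_fun d N F \<and> (\<forall>B\<in>orbit_frames w d N. F B = 0) \<longrightarrow> F A = 0)}"

definition coord_ring :: "nat list \<Rightarrow> nat \<Rightarrow> nat \<Rightarrow> (cmat \<Rightarrow> complex) set" where
  "coord_ring w d N = {(\<lambda>A. if A \<in> schubert_frames w d N then F A else 0) | F. poly_fun d N F}"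

definition act :: "nat list \<Rightarrow> nat \<Rightarrow> nat \<Rightarrow> cmat \<Rightarrow> (cmat \<Rightarrow> complex) \<Rightarrow> (cmat \<Rightarrow> complex)" where
  "act w d N g f = (\<lambda>A. if A \<in> schubert_frames w d N then f (mmult N g A) else 0)"

text \<open>Standard Levi subgroup given by 0 = j_0 < j_1 < ... < j_b = N; js = [j_1,...,j_b].\<close>
definition levi_data :: "nat \<Rightarrow> nat list \<Rightarrow> bool" where
  "levi_data N js \<longleftrightarrow> js \<noteq> [] \<and> sorted_wrt (<) js \<and> 0 < hd js \<and> last js = N"

definition block_of :: "nat list \<Rightarrow> nat \<Rightarrow> nat" where
  "block_of js i = length (filter (\<lambda>j. j \<le> i) js)"

definition levi :: "nat \<Rightarrow> nat list \<Rightarrow> cmat set" where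
  "levi N js = {g. invertible_mat N g \<and>
      (\<forall>i k. i < N \<longrightarrow> k < N \<longrightarrow> block_of js i \<noteq> block_of js k \<longrightarrow> g i k = 0)}"

definition ls_stable :: "nat list \<Rightarrow> nat \<Rightarrow> nat \<Rightarrow> cmat set \<Rightarrow> bool" where
  "ls_stable w d N G \<longleftrightarrow> (\<forall>g\<in>G. \<forall>A\<in>schubert_frames w d N. mmult N g A \<in> schubert_frames w d N)"

definition submodule :: "nat list \<Rightarrow> nat \<Rightarrow> nat \<Rightarrow> cmat set \<Rightarrow> (cmat \<Rightarrow> complex) set \<Rightarrow> bool" where
  "submodule w d N G U \<longleftrightarrow> U \<subseteq> coord_ring w d N \<and> (\<lambda>A. 0) \<in> U \<and>
     (\<forall>f\<in>U. \<forall>h\<in>U. (\<lambda>A. f A + h A) \<in> U) \<and>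
     (\<forall>c. \<forall>f\<in>U. (\<lambda>A. c * f A) \<in> U) \<and>
     (\<forall>g\<in>G. \<forall>f\<in>U. act w d N g f \<in> U)"

definition irreducible_submodule :: "nat list \<Rightarrow> nat \<Rightarrow> nat \<Rightarrow> cmat set \<Rightarrow> (cmat \<Rightarrow> complex) set \<Rightarrow> bool" where
  "irreducible_submodule w d N G U \<longleftrightarrow> submodule w d N G U \<and> U \<noteq> {\<lambda>A. 0} \<and>
     (\<forall>W. submodule w d N G W \<and> W \<subseteq> U \<longrightarrow> W = {\<lambda>A. 0} \<or> W = U)"

definition iso_submodules :: "nat list \<Rightarrow> nat \<Rightarrow> nat \<Rightarrow> cmat set \<Rightarrow> (cmat \<Rightarrow> complex) set \<Rightarrow> (cmat \<Rightarrow> complex) set \<Rightarrow> bool" where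
  "iso_submodules w d N G U1 U2 \<longleftrightarrow> (\<exists>\<phi>. bij_betw \<phi> U1 U2 \<and>
     (\<forall>f\<in>U1. \<forall>h\<in>U1. \<phi> (\<lambda>A. f A + h A) = (\<lambda>A. \<phi> f A + \<phi> h A)) \<and>
     (\<forall>c. \<forall>f\<in>U1. \<phi> (\<lambda>A. c * f A) = (\<lambda>A. c * \<phi> f A)) \<and>
     (\<forall>g\<in>G. \<forall>f\<in>U1. \<phi> (act w d N g f) = act w d N g (\<phi> f)))"

text \<open>Multiplicity free: no irreducible module occurs twice, i.e. two isomorphic
 irreducible submodules coincide.\<close>
definition mult_free :: "nat list \<Rightarrow> nat \<Rightarrow> nat \<Rightarrow> cmat set \<Rightarrow> bool" where
  "mult_free w d N G \<longleftrightarrow> (\<forall>U1 U2. irreducible_submodule w d N G U1 \<and>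
     irreducible_submodule w d N G U2 \<and> iso_submodules w d N G U1 U2 \<longrightarrow> U1 = U2)"

definition red_p :: "nat list \<Rightarrow> nat" where
  "red_p w = (GREATEST p. p \<le> length w \<and> (\<forall>i. 1 \<le> i \<and> i \<le> p \<longrightarrow> w ! (i - 1) = i))"

definition red_w :: "nat list \<Rightarrow> nat list" where
  "red_w w = map (\<lambda>l. l - red_p w) (drop (red_p w) w)"

definition red_d :: "nat list \<Rightarrow> nat" where
  "red_d w = length w - red_p w"

definition red_N :: "nat list \<Rightarrow> nat" where
  "red_N w = last w - red_p w"

definition principal_sub :: "nat \<Rightarrow> nat \<Rightarrow> cmat \<Rightarrow> cmat" where
  "principal_sub p n g = (\<lambda>i k. if i < n \<and> k < n then g (i + p) (k + p) else 0)"

definition red_L :: "nat list \<Rightarrow> cmat set \<Rightarrow> cmat set" where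
  "red_L w L = principal_sub (red_p w) (red_N w) ` L"

end

theory Submission
  imports Defs "Jordan_Normal_Form.Determinant"
begin


definition gsub :: "('a \<Rightarrow> complex) set \<Rightarrow> ('g \<Rightarrow> ('a \<Rightarrow> complex) \<Rightarrow> ('a \<Rightarrow> complex)) \<Rightarrow> 'g set \<Rightarrow> ('a \<Rightarrow> complex) set \<Rightarrow> bool" where
  "gsub C ac G U \<longleftrightarrow> U \<subseteq> C \<and> (\<lambda>A. 0) \<in> U \<and>
     (\<forall>f\<in>U. \<forall>h\<in>U. (\<lambda>A. f A + h A) \<in> U) \<and>
     (\<forall>c. \<forall>f\<in>U. (\<lambda>A. c * f A) \<in> U) \<and>
     (\<forall>g\<in>G. \<forall>f\<in>U. ac g f \<in> U)"

definition girr where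
  "girr C ac G U \<longleftrightarrow> gsub C ac G U \<and> U \<noteq> {\<lambda>A. 0} \<and>
     (\<forall>W. gsub C ac G W \<and> W \<subseteq> U \<longrightarrow> W = {\<lambda>A. 0} \<or> W = U)"

definition giso where
  "giso ac G U1 U2 \<longleftrightarrow> (\<exists>\<phi>. bij_betw \<phi> U1 U2 \<and>
     (\<forall>f\<in>U1. \<forall>h\<in>U1. \<phi> (\<lambda>A. f A + h A) = (\<lambda>A. \<phi> f A + \<phi> h A)) \<and>
     (\<forall>c. \<forall>f\<in>U1. \<phi> (\<lambda>A. c * f A) = (\<lambda>A. c * \<phi> f A)) \<and>
     (\<forall>g\<in>G. \<forall>f\<in>U1. \<phi> (ac g f) = ac g (\<phi> f)))"

definition gmf where
  "gmf C ac G \<longleftrightarrow> (\<forall>U1 U2. girr C ac G U1 \<and> girr C ac G U2 \<and> giso ac G U1 U2 \<longrightarrow> U1 = U2)"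

lemma mult_free_gmf: "mult_free w d N G = gmf (coord_ring w d N) (act w d N) G"
  unfolding mult_free_def gmf_def irreducible_submodule_def girr_def Defs.submodule_def gsub_def
    iso_submodules_def giso_def by simp

lemma gsub_sum:
  assumes "gsub C ac G U" "finite D" "\<forall>n\<in>D. fs n \<in> U"
  shows "(\<lambda>A. \<Sum>n\<in>D. fs n A) \<in> U"
  using assms(2,3)
proof (induction D rule: finite_induct)
  case empty then show ?case using assms(1) by (simp add: gsub_def)
next
  case (insert x F)
  then have "(\<lambda>A. fs x A + (\<Sum>n\<in>F. fs n A)) \<in> U"
    using assms(1) unfolding gsub_def by (metis insert_iff)
  then show ?case using insert by simp
qed

locale side =
  fixes C :: "('a \<Rightarrow> complex) set" and ac :: "'g \<Rightarrow> ('a \<Rightarrow> complex) \<Rightarrow> ('a \<Rightarrow> complex)"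
    and G :: "'g set" and V :: "nat \<Rightarrow> ('a \<Rightarrow> complex) set" and sc :: "complex \<Rightarrow> 'g" and e :: nat
  assumes V_sub: "V n \<subseteq> C"
    and V_zero: "(\<lambda>A. 0) \<in> V n"
    and V_add: "f \<in> V n \<Longrightarrow> h \<in> V n \<Longrightarrow> (\<lambda>A. f A + h A) \<in> V n"
    and V_smult: "f \<in> V n \<Longrightarrow> (\<lambda>A. c * f A) \<in> V n"
    and V_act: "g \<in> G \<Longrightarrow> f \<in> V n \<Longrightarrow> ac g f \<in> V n"
    and decomp: "f \<in> C \<Longrightarrow> \<exists>M fs. (\<forall>n<M. fs n \<in> V n) \<and> f = (\<lambda>A. \<Sum>n<M. fs n A)"
    and sc_in: "t \<noteq> 0 \<Longrightarrow> sc t \<in> G"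
    and sc_act: "t \<noteq> 0 \<Longrightarrow> f \<in> V n \<Longrightarrow> ac (sc t) f = (\<lambda>A. t ^ (e * n) * f A)"
    and ac_add: "ac g (\<lambda>A. f A + h A) = (\<lambda>A. ac g f A + ac g h A)"
    and ac_smult: "ac g (\<lambda>A. c * f A) = (\<lambda>A. c * ac g f A)"
    and e_pos: "0 < e"
begin

lemma ac_zero: "ac g (\<lambda>A. 0) = (\<lambda>A. 0)"
  using ac_smult[of g 0 "\<lambda>A. 0"] by simp

lemma ac_sum: "finite D \<Longrightarrow> ac g (\<lambda>A. \<Sum>n\<in>D. fs n A) = (\<lambda>A. \<Sum>n\<in>D. ac g (fs n) A)"
proof (induction D rule: finite_induct)
  case empty then show ?case by (simp add: ac_zero)
next
  case (insert x F)
  have "ac g (\<lambda>A. \<Sum>n\<in>insert x F. fs n A) = ac g (\<lambda>A. fs x A + (\<Sum>n\<in>F. fs n A))"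
    using insert by simp
  also have "\<dots> = (\<lambda>A. ac g (fs x) A + ac g (\<lambda>A. \<Sum>n\<in>F. fs n A) A)" by (rule ac_add)
  finally show ?case using insert by simp
qed

lemma V_sum: "finite D \<Longrightarrow> (\<forall>n\<in>D. fs n \<in> V m) \<Longrightarrow> (\<lambda>A. \<Sum>n\<in>D. fs n A) \<in> V m"
proof (induction D rule: finite_induct)
  case empty then show ?case by (simp add: V_zero)
next
  case (insert x F) then show ?case using V_add[of "fs x" m "\<lambda>A. \<Sum>n\<in>F. fs n A"] by simp
qed

lemma pow2_inj: "m \<noteq> n \<Longrightarrow> (2::complex) ^ (e * m) \<noteq> 2 ^ (e * n)"
proof
  assume "m \<noteq> n" "(2::complex) ^ (e * m) = 2 ^ (e * n)"
  then have "(2::nat) ^ (e * m) = 2 ^ (e * n)"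
    by (metis of_nat_eq_iff of_nat_numeral of_nat_power)
  then have "e * m = e * n" by simp
  with e_pos \<open>m \<noteq> n\<close> show False by simp
qed

lemma kill:
  assumes U: "gsub C ac G U" and fin: "finite D" and fsV: "\<forall>n\<in>D. fs n \<in> V n"
  shows "(\<lambda>A. \<Sum>n\<in>D. c n * fs n A) \<in> U \<Longrightarrow> m \<in> D \<Longrightarrow> (\<lambda>A. c m * fs m A) \<in> U"
  using fin fsV
proof (induction D arbitrary: c m rule: finite_induct)
  case empty then show ?case by simp
next
  case (insert x F)
  let ?h = "\<lambda>A. \<Sum>n\<in>insert x F. c n * fs n A"
  have fsV': "\<forall>n\<in>insert x F. fs n \<in> V n" using insert by blast
  have hU: "?h \<in> U" using insert by blast
  have mD: "m \<in> insert x F" using insert by blast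
  have IH0: "\<And>c. (\<lambda>A. \<Sum>n\<in>F. c n * fs n A) \<in> U \<Longrightarrow> m \<in> F \<Longrightarrow> (\<lambda>A. c m * fs m A) \<in> U"
    using insert by blast
  have Ucl: "\<And>f h. f \<in> U \<Longrightarrow> h \<in> U \<Longrightarrow> (\<lambda>A. f A + h A) \<in> U"
    "\<And>f k. f \<in> U \<Longrightarrow> (\<lambda>A. k * f A) \<in> U" "\<And>f. f \<in> U \<Longrightarrow> ac (sc 2) f \<in> U"
    using U sc_in[of 2] unfolding gsub_def by auto
  define c' where "c' n = c n * (2 ^ (e * n) - 2 ^ (e * x))" for n
  have h2: "ac (sc 2) ?h = (\<lambda>A. \<Sum>n\<in>insert x F. 2 ^ (e * n) * (c n * fs n A))"
    apply (subst ac_sum[OF insert(1)[THEN finite_insert[THEN iffD2]]])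
    apply (rule ext, rule sum.cong[OF refl])
    subgoal for A n proof -
      assume "n \<in> insert x F"
      then have "fs n \<in> V n" using fsV' by blast
      then show ?thesis using sc_act[of 2 "fs n" n] by (simp add: ac_smult)
    qed
    done
  have "(\<lambda>A. ac (sc 2) ?h A + (- (2 ^ (e * x))) * ?h A) \<in> U"
    using Ucl hU by blast
  also have "(\<lambda>A. ac (sc 2) ?h A + (- (2 ^ (e * x))) * ?h A) = (\<lambda>A. \<Sum>n\<in>F. c' n * fs n A)"
    unfolding h2 using insert(1,2)
    by (simp add: c'_def sum_distrib_left sum.distrib[symmetric] algebra_simps)
  finally have hF: "(\<lambda>A. \<Sum>n\<in>F. c' n * fs n A) \<in> U" .
  have IH: "\<And>m'. m' \<in> F \<Longrightarrow> (\<lambda>A. c' m' * fs m' A) \<in> U"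
    using insert.IH[OF hF] fsV' by auto
  have F1: "\<And>m'. m' \<in> F \<Longrightarrow> (\<lambda>A. c m' * fs m' A) \<in> U"
  proof -
    fix m' assume m': "m' \<in> F"
    then have ne: "(2::complex) ^ (e * m') - 2 ^ (e * x) \<noteq> 0" using pow2_inj[of m' x] insert(2) by auto
    have "(\<lambda>A. inverse (2 ^ (e * m') - 2 ^ (e * x)) * (c' m' * fs m' A)) \<in> U" using Ucl(2) IH[OF m'] by blast
    moreover have "(\<lambda>A. inverse (2 ^ (e * m') - 2 ^ (e * x)) * (c' m' * fs m' A)) = (\<lambda>A. c m' * fs m' A)"
      using ne by (auto simp: c'_def)
    ultimately show "(\<lambda>A. c m' * fs m' A) \<in> U" by simp
  qed
  show ?case
  proof (cases "m = x")
    case False then show ?thesis using F1 mD by auto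
  next
    case True
    have sF: "(\<lambda>A. \<Sum>n\<in>F. c n * fs n A) \<in> U"
      using gsub_sum[OF U insert(1), of "\<lambda>n A. c n * fs n A"] F1 by auto
    have "(\<lambda>A. ?h A + (-1) * (\<Sum>n\<in>F. c n * fs n A)) \<in> U" using Ucl hU sF by blast
    then show ?thesis using True insert(1,2) by simp
  qed
qed

lemma irr_graded:
  assumes "girr C ac G U" shows "\<exists>n. U \<subseteq> V n"
proof -
  have U: "gsub C ac G U" and ne: "U \<noteq> {\<lambda>A. 0}" and mx: "\<And>W. gsub C ac G W \<Longrightarrow> W \<subseteq> U \<Longrightarrow> W = {\<lambda>A. 0} \<or> W = U"
    using assms unfolding girr_def by auto
  have z: "(\<lambda>A. 0) \<in> U" using U by (simp add: gsub_def)
  obtain f where f: "f \<in> U" "f \<noteq> (\<lambda>A. 0)" using ne z by blast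
  have "f \<in> C" using U f unfolding gsub_def by auto
  then obtain M fs where fs: "\<forall>n<M. fs n \<in> V n" "f = (\<lambda>A. \<Sum>n<M. fs n A)" using decomp by blast
  have all: "\<And>m. m < M \<Longrightarrow> fs m \<in> U"
    using kill[OF U, of "{..<M}" fs "\<lambda>_. 1"] fs f by auto
  obtain m where m: "m < M" "fs m \<noteq> (\<lambda>A. 0)"
  proof (rule ccontr)
    assume "\<not> thesis"
    with that have "\<forall>m<M. fs m = (\<lambda>A. 0)" by blast
    then have "f = (\<lambda>A. 0)" using fs by simp
    with f show False by simp
  qed
  let ?W = "U \<inter> V m"
  have W: "gsub C ac G ?W" using U V_zero V_add V_smult V_act unfolding gsub_def by auto
  have "?W \<noteq> {\<lambda>A. 0}" using all[OF m(1)] fs(1) m by auto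
  then have "?W = U" using mx[OF W] by auto
  then show ?thesis by blast
qed

lemma iso_degree:
  assumes U1: "gsub C ac G U1" "U1 \<subseteq> V m" and U2: "U2 \<subseteq> V n" "U2 \<noteq> {\<lambda>A. 0}"
    and iso: "giso ac G U1 U2"
  shows "m = n"
proof (rule ccontr)
  assume mn: "m \<noteq> n"
  obtain \<phi> where bij: "bij_betw \<phi> U1 U2" and sm: "\<forall>c. \<forall>f\<in>U1. \<phi> (\<lambda>A. c * f A) = (\<lambda>A. c * \<phi> f A)"
    and eq: "\<forall>g\<in>G. \<forall>f\<in>U1. \<phi> (ac g f) = ac g (\<phi> f)" using iso unfolding giso_def by blast
  have "\<forall>f\<in>U1. \<phi> f = (\<lambda>A. 0)"
  proof
    fix f assume f: "f \<in> U1"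
    have "\<phi> f \<in> U2" using bij f by (auto simp: bij_betw_def)
    have "\<phi> (ac (sc 2) f) = ac (sc 2) (\<phi> f)" using eq sc_in[of 2] f by auto
    also have "\<dots> = (\<lambda>A. 2 ^ (e * n) * \<phi> f A)" using sc_act[of 2 "\<phi> f" n] \<open>\<phi> f \<in> U2\<close> U2 by auto
    finally have "(\<lambda>A. 2 ^ (e * m) * \<phi> f A) = (\<lambda>A. 2 ^ (e * n) * \<phi> f A)"
      using sc_act[of 2 f m] f U1 sm by auto
    then have "\<And>A. (2 ^ (e * m) - 2 ^ (e * n)) * \<phi> f A = 0"
      by (metis (no_types, lifting) diff_self left_diff_distrib)
    then show "\<phi> f = (\<lambda>A. 0)" using pow2_inj[OF mn] by auto
  qed
  moreover have "U2 = \<phi> ` U1" using bij by (auto simp: bij_betw_def)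
  moreover have "U1 \<noteq> {}" using U1 by (auto simp: gsub_def)
  ultimately have "U2 = {\<lambda>A. 0}" by auto
  with U2 show False by simp
qed

end


locale transfer = S1: side C1 ac1 G1 V1 sc1 e1 + S2: side C2 ac2 G2 V2 sc2 e2
  for C1 ac1 G1 V1 sc1 e1 C2 ac2 G2 V2 sc2 e2 +
  fixes \<pi> :: "'g \<Rightarrow> 'h" and \<chi> :: "'g \<Rightarrow> complex" and T :: "nat \<Rightarrow> ('b \<Rightarrow> complex) \<Rightarrow> ('a \<Rightarrow> complex)"
  assumes G2_eq: "G2 = \<pi> ` G1"
    and chi_nz: "g \<in> G1 \<Longrightarrow> \<chi> g \<noteq> 0"
    and T_bij: "bij_betw (T n) (V2 n) (V1 n)"
    and T_add: "f \<in> V2 n \<Longrightarrow> h \<in> V2 n \<Longrightarrow> T n (\<lambda>A. f A + h A) = (\<lambda>A. T n f A + T n h A)"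
    and T_smult: "f \<in> V2 n \<Longrightarrow> T n (\<lambda>A. c * f A) = (\<lambda>A. c * T n f A)"
    and T_eqv: "g \<in> G1 \<Longrightarrow> f \<in> V2 n \<Longrightarrow> ac1 g (T n f) = (\<lambda>A. \<chi> g ^ n * T n (ac2 (\<pi> g) f) A)"
begin

lemma T_in: "f \<in> V2 n \<Longrightarrow> T n f \<in> V1 n" using T_bij by (auto simp: bij_betw_def)
lemma T_inj: "f \<in> V2 n \<Longrightarrow> h \<in> V2 n \<Longrightarrow> T n f = T n h \<Longrightarrow> f = h"
  using T_bij by (auto simp: bij_betw_def inj_on_def)
lemma T_zero: "T n (\<lambda>A. 0) = (\<lambda>A. 0)"
  using T_smult[OF S2.V_zero, of n 0] by simp
lemma T_surj: "f \<in> V1 n \<Longrightarrow> \<exists>h\<in>V2 n. f = T n h"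
  using T_bij by (auto simp: bij_betw_def)

lemma T_ac2: "g \<in> G1 \<Longrightarrow> f \<in> V2 n \<Longrightarrow> T n (ac2 (\<pi> g) f) = (\<lambda>A. inverse (\<chi> g ^ n) * ac1 g (T n f) A)"
  using T_eqv[of g f n] chi_nz[of g] by auto

lemma sub_transfer:
  assumes U: "U \<subseteq> V2 n"
  shows "gsub C2 ac2 G2 U \<longleftrightarrow> gsub C1 ac1 G1 (T n ` U)"
proof
  assume H: "gsub C2 ac2 G2 U"
  show "gsub C1 ac1 G1 (T n ` U)"
    unfolding gsub_def
  proof (intro conjI ballI allI)
    show "T n ` U \<subseteq> C1" using U T_in S1.V_sub by blast
    show "(\<lambda>A. 0) \<in> T n ` U" using H T_zero unfolding gsub_def by (metis image_eqI)
  next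
    fix f h assume "f \<in> T n ` U" "h \<in> T n ` U"
    then obtain f' h' where fh: "f' \<in> U" "h' \<in> U" "f = T n f'" "h = T n h'" by blast
    have "(\<lambda>A. f' A + h' A) \<in> U" using H fh unfolding gsub_def by blast
    moreover have "T n (\<lambda>A. f' A + h' A) = (\<lambda>A. f A + h A)"
      using T_add[of f' n h'] U fh by blast
    ultimately show "(\<lambda>A. f A + h A) \<in> T n ` U" by (metis image_eqI)
  next
    fix c f assume "f \<in> T n ` U"
    then obtain f' where fh: "f' \<in> U" "f = T n f'" by blast
    have "(\<lambda>A. c * f' A) \<in> U" using H fh unfolding gsub_def by blast
    moreover have "T n (\<lambda>A. c * f' A) = (\<lambda>A. c * f A)"
      using T_smult[of f' n c] U fh by blast
    ultimately show "(\<lambda>A. c * f A) \<in> T n ` U" by (metis image_eqI)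
  next
    fix g f assume g: "g \<in> G1" and "f \<in> T n ` U"
    then obtain f' where f': "f' \<in> U" "f = T n f'" by blast
    have "\<pi> g \<in> G2" using G2_eq g by blast
    then have a: "ac2 (\<pi> g) f' \<in> U" and b: "ac2 (\<pi> g) f' \<in> V2 n"
      using H f' U S2.V_act unfolding gsub_def by auto
    have "(\<lambda>A. \<chi> g ^ n * ac2 (\<pi> g) f' A) \<in> U" using H a unfolding gsub_def by blast
    moreover have "ac1 g f = T n (\<lambda>A. \<chi> g ^ n * ac2 (\<pi> g) f' A)"
      using T_eqv[OF g, of f' n] T_smult[OF b] f' U by auto
    ultimately show "ac1 g f \<in> T n ` U" by blast
  qed
next
  assume H: "gsub C1 ac1 G1 (T n ` U)"
  have Hc: "\<And>f h. f \<in> T n ` U \<Longrightarrow> h \<in> T n ` U \<Longrightarrow> (\<lambda>A. f A + h A) \<in> T n ` U"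
    "\<And>c f. f \<in> T n ` U \<Longrightarrow> (\<lambda>A. c * f A) \<in> T n ` U"
    "\<And>g f. g \<in> G1 \<Longrightarrow> f \<in> T n ` U \<Longrightarrow> ac1 g f \<in> T n ` U" "(\<lambda>A. 0) \<in> T n ` U"
    using H unfolding gsub_def by auto
  have bk: "\<And>f. f \<in> V2 n \<Longrightarrow> T n f \<in> T n ` U \<Longrightarrow> f \<in> U"
    using T_inj U by blast
  show "gsub C2 ac2 G2 U"
    unfolding gsub_def
  proof (intro conjI ballI allI)
    show "U \<subseteq> C2" using U S2.V_sub by blast
    show "(\<lambda>A. 0) \<in> U" using bk[OF S2.V_zero] Hc(4) T_zero by simp
  next
    fix f h assume f: "f \<in> U" and h: "h \<in> U"
    then have fV: "f \<in> V2 n" and hV: "h \<in> V2 n" using U by auto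
    have "T n (\<lambda>A. f A + h A) = (\<lambda>A. T n f A + T n h A)" using T_add[OF fV hV] .
    moreover have "(\<lambda>A. T n f A + T n h A) \<in> T n ` U" using Hc(1) f h by blast
    ultimately show "(\<lambda>A. f A + h A) \<in> U" using bk[OF S2.V_add[OF fV hV]] by simp
  next
    fix c f assume f: "f \<in> U"
    then have fV: "f \<in> V2 n" using U by auto
    have "T n (\<lambda>A. c * f A) = (\<lambda>A. c * T n f A)" using T_smult[OF fV] .
    moreover have "(\<lambda>A. c * T n f A) \<in> T n ` U" using Hc(2) f by blast
    ultimately show "(\<lambda>A. c * f A) \<in> U" using bk[OF S2.V_smult[OF fV]] by simp
  next
    fix g2 f assume g2: "g2 \<in> G2" and f: "f \<in> U"
    then obtain g where g: "g \<in> G1" "g2 = \<pi> g" using G2_eq by blast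
    have fV: "f \<in> V2 n" using f U by blast
    have "ac2 g2 f \<in> V2 n" using S2.V_act g2 fV by blast
    moreover have "T n (ac2 g2 f) \<in> T n ` U"
      using T_ac2[OF g(1) fV] g Hc(2)[OF Hc(3)[OF g(1)]] f by auto
    ultimately show "ac2 g2 f \<in> U" using bk by blast
  qed
qed

lemma T_img_zero: "U \<subseteq> V2 n \<Longrightarrow> (\<lambda>A. 0) \<in> U \<Longrightarrow> T n ` U = {\<lambda>A. 0} \<longleftrightarrow> U = {\<lambda>A. 0}"
proof
  assume U: "U \<subseteq> V2 n" "(\<lambda>A. 0) \<in> U" "T n ` U = {\<lambda>A. 0}"
  show "U = {\<lambda>A. 0}"
  proof (rule equalityI)
    show "U \<subseteq> {\<lambda>A. 0}"
    proof
      fix f assume fU: "f \<in> U"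
      then have "T n f = T n (\<lambda>A. 0)" using U T_zero by auto
      then show "f \<in> {\<lambda>A. 0}" using T_inj[of f n "\<lambda>A. 0"] U fU S2.V_zero by auto
    qed
    show "{\<lambda>A. 0} \<subseteq> U" using U by auto
  qed
qed (auto simp: T_zero)

lemma irr_transfer:
  assumes U: "U \<subseteq> V2 n"
  shows "girr C2 ac2 G2 U \<longleftrightarrow> girr C1 ac1 G1 (T n ` U)"
proof
  assume H: "girr C2 ac2 G2 U"
  then have s: "gsub C2 ac2 G2 U" and ne: "U \<noteq> {\<lambda>A. 0}"
    and mx: "\<And>W. gsub C2 ac2 G2 W \<Longrightarrow> W \<subseteq> U \<Longrightarrow> W = {\<lambda>A. 0} \<or> W = U" unfolding girr_def by auto
  have z: "(\<lambda>A. 0) \<in> U" using s by (simp add: gsub_def)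
  show "girr C1 ac1 G1 (T n ` U)" unfolding girr_def
  proof (intro conjI allI impI)
    show "gsub C1 ac1 G1 (T n ` U)" using sub_transfer[OF U] s by simp
    show "T n ` U \<noteq> {\<lambda>A. 0}" using T_img_zero[OF U z] ne by simp
  next
    fix W assume W: "gsub C1 ac1 G1 W \<and> W \<subseteq> T n ` U"
    define W' where "W' = U \<inter> {f. T n f \<in> W}"
    have WW: "W = T n ` W'" using W unfolding W'_def by auto
    have W'U: "W' \<subseteq> V2 n" using U W'_def by auto
    have "gsub C2 ac2 G2 W'" using sub_transfer[OF W'U] W WW by simp
    then have "W' = {\<lambda>A. 0} \<or> W' = U" using mx W'_def by auto
    then show "W = {\<lambda>A. 0} \<or> W = T n ` U" using WW T_zero by auto
  qed
next
  assume H: "girr C1 ac1 G1 (T n ` U)"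
  then have s: "gsub C1 ac1 G1 (T n ` U)" and ne: "T n ` U \<noteq> {\<lambda>A. 0}"
    and mx: "\<And>W. gsub C1 ac1 G1 W \<Longrightarrow> W \<subseteq> T n ` U \<Longrightarrow> W = {\<lambda>A. 0} \<or> W = T n ` U"
    unfolding girr_def by auto
  have s2: "gsub C2 ac2 G2 U" using sub_transfer[OF U] s by simp
  have z: "(\<lambda>A. 0) \<in> U" using s2 by (simp add: gsub_def)
  show "girr C2 ac2 G2 U" unfolding girr_def
  proof (intro conjI allI impI)
    show "gsub C2 ac2 G2 U" by (rule s2)
    show "U \<noteq> {\<lambda>A. 0}" using T_img_zero[OF U z] ne by simp
  next
    fix W assume W: "gsub C2 ac2 G2 W \<and> W \<subseteq> U"
    then have WV: "W \<subseteq> V2 n" using U by blast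
    have zW: "(\<lambda>A. 0) \<in> W" using W by (simp add: gsub_def)
    have "T n ` W = {\<lambda>A. 0} \<or> T n ` W = T n ` U"
      using mx sub_transfer[OF WV] W by blast
    then show "W = {\<lambda>A. 0} \<or> W = U"
    proof
      assume "T n ` W = {\<lambda>A. 0}" then show ?thesis using T_img_zero[OF WV zW] by simp
    next
      assume "T n ` W = T n ` U"
      moreover have "inj_on (T n) (V2 n)" using T_bij by (simp add: bij_betw_def)
      ultimately have "W = U" using inj_on_image_eq_iff[of "T n" "V2 n" W U] WV U by blast
      then show ?thesis by simp
    qed
  qed
qed

definition Ti where "Ti n = inv_into (V2 n) (T n)"

lemma Ti_T: "h \<in> V2 n \<Longrightarrow> Ti n (T n h) = h"
  unfolding Ti_def using T_bij by (simp add: bij_betw_def inv_into_f_f)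
lemma T_Ti: "f \<in> V1 n \<Longrightarrow> T n (Ti n f) = f"
  unfolding Ti_def using T_bij by (simp add: bij_betw_def f_inv_into_f)
lemma Ti_in: "f \<in> V1 n \<Longrightarrow> Ti n f \<in> V2 n"
  unfolding Ti_def using T_bij by (simp add: bij_betw_def inv_into_into)

lemma iso_fwd:
  assumes U: "U1 \<subseteq> V2 n" "U2 \<subseteq> V2 n" and s: "gsub C2 ac2 G2 U1"
    and iso: "giso ac2 G2 U1 U2"
  shows "giso ac1 G1 (T n ` U1) (T n ` U2)"
proof -
  obtain \<psi> where bij: "bij_betw \<psi> U1 U2" and ad: "\<forall>f\<in>U1. \<forall>h\<in>U1. \<psi> (\<lambda>A. f A + h A) = (\<lambda>A. \<psi> f A + \<psi> h A)"
    and sm: "\<forall>c. \<forall>f\<in>U1. \<psi> (\<lambda>A. c * f A) = (\<lambda>A. c * \<psi> f A)"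
    and eq: "\<forall>g\<in>G2. \<forall>f\<in>U1. \<psi> (ac2 g f) = ac2 g (\<psi> f)" using iso unfolding giso_def by blast
  define \<phi> where "\<phi> f = T n (\<psi> (Ti n f))" for f
  have phT: "\<phi> (T n h) = T n (\<psi> h)" if h: "h \<in> U1" for h
  proof -
    have "h \<in> V2 n" using h U(1) by blast
    then show ?thesis unfolding \<phi>_def by (simp add: Ti_T)
  qed
  have psU: "\<And>h. h \<in> U1 \<Longrightarrow> \<psi> h \<in> U2" using bij by (auto simp: bij_betw_def)
  have sc: "\<And>c h h'. h \<in> U1 \<Longrightarrow> h' \<in> U1 \<Longrightarrow> (\<lambda>A. h A + h' A) \<in> U1 \<and> (\<lambda>A. c * h A) \<in> U1"
    using s unfolding gsub_def by blast
  show ?thesis unfolding giso_def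
  proof (intro exI conjI ballI allI)
    have injV: "inj_on (T n) (V2 n)" using T_bij by (simp add: bij_betw_def)
    have inj1: "inj_on (T n) U1" "inj_on (T n) U2" using inj_on_subset[OF injV U(1)] inj_on_subset[OF injV U(2)] by auto
    have "bij_betw (T n \<circ> \<psi>) U1 (T n ` U2)"
      using bij_betw_trans[OF bij, of "T n" "T n ` U2"] inj1 by (simp add: bij_betw_imageI)
    moreover have "bij_betw (T n) U1 (T n ` U1)" using inj1 by (simp add: bij_betw_imageI)
    then have "bij_betw (the_inv_into U1 (T n)) (T n ` U1) U1" by (rule bij_betw_the_inv_into)
    ultimately have b: "bij_betw ((T n \<circ> \<psi>) \<circ> the_inv_into U1 (T n)) (T n ` U1) (T n ` U2)"
      by (rule bij_betw_trans[rotated])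
    show "bij_betw \<phi> (T n ` U1) (T n ` U2)"
    proof (rule bij_betw_cong[THEN iffD1, OF _ b])
      fix f assume "f \<in> T n ` U1"
      then obtain h where h: "h \<in> U1" "f = T n h" by blast
      then show "((T n \<circ> \<psi>) \<circ> the_inv_into U1 (T n)) f = \<phi> f"
        using phT the_inv_into_f_f[OF inj1(1) h(1)] by simp
    qed
  next
    fix f h assume "f \<in> T n ` U1" "h \<in> T n ` U1"
    then obtain f' h' where fh: "f' \<in> U1" "h' \<in> U1" "f = T n f'" "h = T n h'" by blast
    have fV: "f' \<in> V2 n" "h' \<in> V2 n" using fh U by auto
    have "(\<lambda>A. f A + h A) = T n (\<lambda>A. f' A + h' A)" using fh T_add[OF fV] by simp
    then have "\<phi> (\<lambda>A. f A + h A) = T n (\<psi> (\<lambda>A. f' A + h' A))" using phT sc fh by auto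
    also have "\<dots> = T n (\<lambda>A. \<psi> f' A + \<psi> h' A)" using ad fh by auto
    also have "\<dots> = (\<lambda>A. T n (\<psi> f') A + T n (\<psi> h') A)"
      using T_add psU[OF fh(1)] psU[OF fh(2)] U(2) by blast
    finally show "\<phi> (\<lambda>A. f A + h A) = (\<lambda>A. \<phi> f A + \<phi> h A)" using phT fh by simp
  next
    fix c f assume "f \<in> T n ` U1"
    then obtain f' where fh: "f' \<in> U1" "f = T n f'" by blast
    have fV: "f' \<in> V2 n" using fh U by auto
    have "(\<lambda>A. c * f A) = T n (\<lambda>A. c * f' A)" using fh T_smult[OF fV] by simp
    then have "\<phi> (\<lambda>A. c * f A) = T n (\<psi> (\<lambda>A. c * f' A))" using phT sc fh by auto
    also have "\<dots> = T n (\<lambda>A. c * \<psi> f' A)" using sm fh by auto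
    also have "\<dots> = (\<lambda>A. c * T n (\<psi> f') A)" using T_smult psU[OF fh(1)] U(2) by blast
    finally show "\<phi> (\<lambda>A. c * f A) = (\<lambda>A. c * \<phi> f A)" using phT fh by simp
  next
    fix g f assume g: "g \<in> G1" and "f \<in> T n ` U1"
    then obtain f' where fh: "f' \<in> U1" "f = T n f'" by blast
    have pg: "\<pi> g \<in> G2" using G2_eq g by blast
    have a1: "ac2 (\<pi> g) f' \<in> U1" using s pg fh unfolding gsub_def by blast
    have a2: "(\<lambda>A. \<chi> g ^ n * ac2 (\<pi> g) f' A) \<in> U1" using sc a1 by blast
    have fV12: "f' \<in> V2 n" "\<psi> f' \<in> V2 n" using fh U psU by auto
    have fV: "f' \<in> V2 n" "\<psi> f' \<in> V2 n" "ac2 (\<pi> g) f' \<in> V2 n" "ac2 (\<pi> g) (\<psi> f') \<in> V2 n"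
      using fV12 S2.V_act[OF pg] by auto
    have "ac1 g f = T n (\<lambda>A. \<chi> g ^ n * ac2 (\<pi> g) f' A)"
      using T_eqv[OF g fV(1)] T_smult[OF fV(3)] fh by simp
    then have "\<phi> (ac1 g f) = T n (\<psi> (\<lambda>A. \<chi> g ^ n * ac2 (\<pi> g) f' A))" using phT a2 by simp
    also have "\<dots> = T n (\<lambda>A. \<chi> g ^ n * ac2 (\<pi> g) (\<psi> f') A)" using sm eq a1 pg fh by auto
    also have "\<dots> = ac1 g (T n (\<psi> f'))" using T_eqv[OF g fV(2)] T_smult[OF fV(4)] by simp
    finally show "\<phi> (ac1 g f) = ac1 g (\<phi> f)" using phT fh by simp
  qed
qed

lemma iso_bwd:
  assumes U: "U1 \<subseteq> V2 n" "U2 \<subseteq> V2 n" and s: "gsub C2 ac2 G2 U1"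
    and iso: "giso ac1 G1 (T n ` U1) (T n ` U2)"
  shows "giso ac2 G2 U1 U2"
proof -
  have s1: "gsub C1 ac1 G1 (T n ` U1)" using sub_transfer[OF U(1)] s by simp
  obtain \<phi> where bij: "bij_betw \<phi> (T n ` U1) (T n ` U2)"
    and ad: "\<forall>f\<in>T n ` U1. \<forall>h\<in>T n ` U1. \<phi> (\<lambda>A. f A + h A) = (\<lambda>A. \<phi> f A + \<phi> h A)"
    and sm: "\<forall>c. \<forall>f\<in>T n ` U1. \<phi> (\<lambda>A. c * f A) = (\<lambda>A. c * \<phi> f A)"
    and eq: "\<forall>g\<in>G1. \<forall>f\<in>T n ` U1. \<phi> (ac1 g f) = ac1 g (\<phi> f)" using iso unfolding giso_def by (elim exE conjE) (rule that)
  define \<psi> where "\<psi> h = Ti n (\<phi> (T n h))" for h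
  have phU: "\<phi> (T n h) \<in> T n ` U2" if "h \<in> U1" for h using bij that unfolding bij_betw_def by blast
  have phV: "\<phi> (T n h) \<in> V1 n" if hU: "h \<in> U1" for h
  proof -
    obtain k where "k \<in> U2" "\<phi> (T n h) = T n k" using phU[OF hU] by blast
    then show ?thesis using U(2) T_in by auto
  qed
  have TU: "T n (\<psi> h) = \<phi> (T n h)" if "h \<in> U1" for h
    unfolding \<psi>_def using T_Ti[OF phV[OF that]] .
  have psV: "\<psi> h \<in> V2 n" if "h \<in> U1" for h unfolding \<psi>_def using Ti_in[OF phV[OF that]] .
  have scA: "(\<lambda>A. h A + h' A) \<in> U1" if "h \<in> U1" "h' \<in> U1" for h h'
    using s that unfolding gsub_def by blast
  have scM: "(\<lambda>A. c * h A) \<in> U1" if "h \<in> U1" for c h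
    using s that unfolding gsub_def by blast
  have UV: "h \<in> V2 n" if "h \<in> U1" for h using that U(1) by blast
  have TinjV: "a = b" if "a \<in> V2 n" "b \<in> V2 n" "T n a = T n b" for a b using T_inj that by blast
  show ?thesis unfolding giso_def
  proof (intro exI conjI ballI allI)
    have injV: "inj_on (T n) (V2 n)" using T_bij by (simp add: bij_betw_def)
    have inj1: "inj_on (T n) U1" "inj_on (T n) U2" using inj_on_subset[OF injV U(1)] inj_on_subset[OF injV U(2)] by auto
    have b1: "bij_betw (T n) U1 (T n ` U1)" using inj1 by (simp add: bij_betw_imageI)
    have b2: "bij_betw (the_inv_into U2 (T n)) (T n ` U2) U2"
      using inj1 by (simp add: bij_betw_imageI bij_betw_the_inv_into)
    have b: "bij_betw (the_inv_into U2 (T n) \<circ> (\<phi> \<circ> T n)) U1 U2"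
      by (rule bij_betw_trans[OF bij_betw_trans[OF b1 bij] b2])
    show "bij_betw \<psi> U1 U2"
    proof (rule bij_betw_cong[THEN iffD1, OF _ b])
      fix h assume h: "h \<in> U1"
      then obtain k where k: "k \<in> U2" "\<phi> (T n h) = T n k" using phU by blast
      have kV: "k \<in> V2 n" using k(1) U(2) by blast
      have "\<psi> h = k" using TinjV[OF psV[OF h] kV] TU[OF h] k(2) by simp
      then show "(the_inv_into U2 (T n) \<circ> (\<phi> \<circ> T n)) h = \<psi> h"
        using k the_inv_into_f_f[OF inj1(2) k(1)] by simp
    qed
  next
    fix f h assume f: "f \<in> U1" and h: "h \<in> U1"
    have "T n (\<psi> (\<lambda>A. f A + h A)) = \<phi> (T n (\<lambda>A. f A + h A))" using TU[OF scA[OF f h]] .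
    also have "T n (\<lambda>A. f A + h A) = (\<lambda>A. T n f A + T n h A)" using T_add[OF UV[OF f] UV[OF h]] .
    also have "\<phi> \<dots> = (\<lambda>A. \<phi> (T n f) A + \<phi> (T n h) A)" using ad f h by blast
    also have "\<dots> = (\<lambda>A. T n (\<psi> f) A + T n (\<psi> h) A)" using TU[OF f] TU[OF h] by simp
    also have "\<dots> = T n (\<lambda>A. \<psi> f A + \<psi> h A)" using T_add[OF psV[OF f] psV[OF h]] by simp
    finally show "\<psi> (\<lambda>A. f A + h A) = (\<lambda>A. \<psi> f A + \<psi> h A)"
      using TinjV[OF psV[OF scA[OF f h]] S2.V_add[OF psV[OF f] psV[OF h]]] by blast
  next
    fix c f assume f: "f \<in> U1"
    have "T n (\<psi> (\<lambda>A. c * f A)) = \<phi> (T n (\<lambda>A. c * f A))" using TU[OF scM[OF f]] .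
    also have "T n (\<lambda>A. c * f A) = (\<lambda>A. c * T n f A)" using T_smult[OF UV[OF f]] .
    also have "\<phi> \<dots> = (\<lambda>A. c * \<phi> (T n f) A)" using sm f by blast
    also have "\<dots> = (\<lambda>A. c * T n (\<psi> f) A)" using TU[OF f] by simp
    also have "\<dots> = T n (\<lambda>A. c * \<psi> f A)" using T_smult[OF psV[OF f]] by simp
    finally show "\<psi> (\<lambda>A. c * f A) = (\<lambda>A. c * \<psi> f A)"
      using TinjV[OF psV[OF scM[OF f]] S2.V_smult[OF psV[OF f]]] by blast
  next
    fix g2 f assume g2: "g2 \<in> G2" and fh: "f \<in> U1"
    obtain g where g: "g \<in> G1" "g2 = \<pi> g" using G2_eq g2 by blast
    have a1: "ac2 g2 f \<in> U1" using s g2 fh unfolding gsub_def by blast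
    have fV: "f \<in> V2 n" using fh U by auto
    have nz: "\<chi> g ^ n \<noteq> 0" using chi_nz g by simp
    have Tf: "T n f \<in> T n ` U1" using fh by blast
    have "T n (\<psi> (ac2 g2 f)) = \<phi> (T n (ac2 g2 f))" using TU[OF a1] .
    also have "T n (ac2 g2 f) = (\<lambda>A. inverse (\<chi> g ^ n) * ac1 g (T n f) A)" using T_ac2[OF g(1) fV] g by simp
    also have "\<phi> \<dots> = (\<lambda>A. inverse (\<chi> g ^ n) * \<phi> (ac1 g (T n f)) A)"
    proof -
      have "ac1 g (T n f) \<in> T n ` U1" using s1 g(1) Tf unfolding gsub_def by blast
      then show ?thesis using sm by blast
    qed
    also have "\<phi> (ac1 g (T n f)) = ac1 g (\<phi> (T n f))" using eq g(1) Tf by blast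
    also have "\<phi> (T n f) = T n (\<psi> f)" using TU[OF fh] by simp
    also have "ac1 g (T n (\<psi> f)) = (\<lambda>A. \<chi> g ^ n * T n (ac2 g2 (\<psi> f)) A)" using T_eqv[OF g(1) psV[OF fh]] g by simp
    finally have X: "T n (\<psi> (ac2 g2 f)) = (\<lambda>A. inverse (\<chi> g ^ n) * (\<chi> g ^ n * T n (ac2 g2 (\<psi> f)) A))" .
    have iv: "inverse (\<chi> g ^ n) * \<chi> g ^ n = 1" using nz by simp
    have "T n (\<psi> (ac2 g2 f)) = T n (ac2 g2 (\<psi> f))" unfolding X mult.assoc[symmetric] iv by simp
    then show "\<psi> (ac2 g2 f) = ac2 g2 (\<psi> f)"
      using TinjV[OF psV[OF a1] S2.V_act[OF g2 psV[OF fh]]] by blast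
  qed
qed

theorem mf_iff: "gmf C1 ac1 G1 \<longleftrightarrow> gmf C2 ac2 G2"
proof
  assume H: "gmf C1 ac1 G1"
  show "gmf C2 ac2 G2" unfolding gmf_def
  proof (intro allI impI)
    fix U1 U2 assume A: "girr C2 ac2 G2 U1 \<and> girr C2 ac2 G2 U2 \<and> giso ac2 G2 U1 U2"
    obtain m where m: "U1 \<subseteq> V2 m" using S2.irr_graded A by blast
    obtain m' where m': "U2 \<subseteq> V2 m'" using S2.irr_graded A by blast
    have "m = m'" using S2.iso_degree[OF _ m m'] A unfolding girr_def by blast
    then have m2: "U2 \<subseteq> V2 m" using m' by simp
    have g1: "girr C1 ac1 G1 (T m ` U1)" "girr C1 ac1 G1 (T m ` U2)"
      using irr_transfer[OF m] irr_transfer[OF m2] A by auto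
    have "giso ac1 G1 (T m ` U1) (T m ` U2)"
      using iso_fwd[OF m m2] A unfolding girr_def by blast
    then have "T m ` U1 = T m ` U2" using H g1 unfolding gmf_def by blast
    moreover have "inj_on (T m) (V2 m)" using T_bij by (simp add: bij_betw_def)
    ultimately show "U1 = U2" using inj_on_image_eq_iff m m2 by blast
  qed
next
  assume H: "gmf C2 ac2 G2"
  show "gmf C1 ac1 G1" unfolding gmf_def
  proof (intro allI impI)
    fix U1 U2 assume A: "girr C1 ac1 G1 U1 \<and> girr C1 ac1 G1 U2 \<and> giso ac1 G1 U1 U2"
    obtain m where m: "U1 \<subseteq> V1 m" using S1.irr_graded A by blast
    obtain m' where m': "U2 \<subseteq> V1 m'" using S1.irr_graded A by blast
    have "m = m'" using S1.iso_degree[OF _ m m'] A unfolding girr_def by blast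
    then have m2: "U2 \<subseteq> V1 m" using m' by simp
    define U1' where "U1' = Ti m ` U1"
    define U2' where "U2' = Ti m ` U2"
    have e1: "T m ` U1' = U1" unfolding U1'_def using T_Ti m by (force simp: image_image)
    have e2: "T m ` U2' = U2" unfolding U2'_def using T_Ti m2 by (force simp: image_image)
    have s1: "U1' \<subseteq> V2 m" "U2' \<subseteq> V2 m" unfolding U1'_def U2'_def using Ti_in m m2 by auto
    have g2: "girr C2 ac2 G2 U1'" "girr C2 ac2 G2 U2'"
      using irr_transfer[OF s1(1)] irr_transfer[OF s1(2)] A e1 e2 by auto
    have "giso ac2 G2 U1' U2'"
      using iso_bwd[OF s1] A e1 e2 g2 unfolding girr_def by blast
    then have "U1' = U2'" using H g2 unfolding gmf_def by blast
    then show "U1 = U2" using e1 e2 by simp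
  qed
qed

end


definition ev :: "(complex \<times> nat list list) list \<Rightarrow> cmat \<Rightarrow> complex" where
  "ev xs A = (\<Sum>(c, Is)\<leftarrow>xs. c * (\<Prod>I\<leftarrow>Is. pluecker I A))"

definition homp :: "nat \<Rightarrow> nat \<Rightarrow> nat \<Rightarrow> (complex \<times> nat list list) list \<Rightarrow> bool" where
  "homp d N n xs \<longleftrightarrow> (\<forall>(c, Is)\<in>set xs. length Is = n \<and> (\<forall>I\<in>set Is. I \<in> Iseq d N))"

definition pf :: "nat \<Rightarrow> nat \<Rightarrow> nat \<Rightarrow> (cmat \<Rightarrow> complex) \<Rightarrow> bool" where
  "pf d N n F \<longleftrightarrow> (\<exists>xs. homp d N n xs \<and> F = ev xs)"

lemma poly_fun_ev: "poly_fun d N F \<longleftrightarrow> (\<exists>xs. (\<forall>(c, Is)\<in>set xs. \<forall>I\<in>set Is. I \<in> Iseq d N) \<and> F = ev xs)"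
  unfolding poly_fun_def ev_def by (simp add: fun_eq_iff)

lemma pf_poly: "pf d N n F \<Longrightarrow> poly_fun d N F"
  unfolding pf_def poly_fun_ev homp_def by fastforce

lemma ev_Nil[simp]: "ev [] A = 0" by (simp add: ev_def)
lemma ev_Cons[simp]: "ev ((c, Is) # xs) A = c * (\<Prod>I\<leftarrow>Is. pluecker I A) + ev xs A"
  by (simp add: ev_def)
lemma ev_append[simp]: "ev (xs @ ys) A = ev xs A + ev ys A" by (simp add: ev_def)

lemma ev_filter_sum:
  assumes "\<forall>(c, Is)\<in>set xs. length Is < M"
  shows "ev xs A = (\<Sum>n<M. ev (filter (\<lambda>(c, Is). length Is = n) xs) A)"
  using assms
proof (induction xs)
  case Nil then show ?case by simp
next
  case (Cons x xs)
  obtain c Is where x: "x = (c, Is)" by fastforce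
  have l: "length Is < M" using Cons.prems x by auto
  have "(\<Sum>n<M. ev (filter (\<lambda>(c, Is). length Is = n) (x # xs)) A)
      = (\<Sum>n<M. (if length Is = n then c * (\<Prod>I\<leftarrow>Is. pluecker I A) else 0)) +
        (\<Sum>n<M. ev (filter (\<lambda>(c, Is). length Is = n) xs) A)"
    unfolding sum.distrib[symmetric] by (rule sum.cong, auto simp: x)
  also have "(\<Sum>n<M. (if length Is = n then c * (\<Prod>I\<leftarrow>Is. pluecker I A) else 0)) = c * (\<Prod>I\<leftarrow>Is. pluecker I A)"
    using l by (simp add: sum.delta)
  finally show ?case using Cons x by simp
qed

lemma poly_decomp:
  assumes "poly_fun d N F"
  shows "\<exists>M Fs. (\<forall>n. pf d N n (Fs n)) \<and> F = (\<lambda>A. \<Sum>n<M. Fs n A)"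
proof -
  obtain xs where xs: "\<forall>(c, Is)\<in>set xs. \<forall>I\<in>set Is. I \<in> Iseq d N" "F = ev xs"
    using assms unfolding poly_fun_ev by blast
  define M where "M = Suc (sum_list (map (\<lambda>(c, Is). length Is) xs))"
  have lt: "\<forall>(c, Is)\<in>set xs. length Is < M"
  proof (intro ballI, clarify)
    fix c Is assume "(c, Is) \<in> set xs"
    then have "length Is \<le> sum_list (map (\<lambda>(c, Is). length Is) xs)"
      using member_le_sum_list[of "length Is" "map (\<lambda>(c, Is). length Is) xs"] by force
    then show "length Is < M" unfolding M_def by simp
  qed
  define Fs where "Fs n = ev (filter (\<lambda>(c, Is). length Is = n) xs)" for n
  have "\<forall>n. pf d N n (Fs n)"
  proof
    fix n show "pf d N n (Fs n)" unfolding pf_def Fs_def homp_def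
      by (rule exI[of _ "filter (\<lambda>(c, Is). length Is = n) xs"]) (use xs(1) in auto)
  qed
  moreover have "F = (\<lambda>A. \<Sum>n<M. Fs n A)" using ev_filter_sum[OF lt] xs(2) Fs_def by auto
  ultimately show ?thesis by blast
qed

lemma pf_zero: "pf d N n (\<lambda>A. 0)"
  unfolding pf_def homp_def by (rule exI[of _ "[]"]) (auto simp: fun_eq_iff)

lemma pf_add: "pf d N n F \<Longrightarrow> pf d N n G \<Longrightarrow> pf d N n (\<lambda>A. F A + G A)"
  unfolding pf_def homp_def by (elim exE conjE, rule_tac x="xs @ xsa" in exI) auto

lemma ev_smult: "ev (map (\<lambda>(c, Is). (k * c, Is)) xs) A = k * ev xs A"
  by (induction xs) (auto simp: algebra_simps)

lemma pf_smult: "pf d N n F \<Longrightarrow> pf d N n (\<lambda>A. k * F A)"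
  unfolding pf_def
proof (elim exE conjE)
  fix xs assume "homp d N n xs" "F = ev xs"
  then show "\<exists>xs. homp d N n xs \<and> (\<lambda>A. k * F A) = ev xs"
    by (intro exI[of _ "map (\<lambda>(c, Is). (k * c, Is)) xs"]) (auto simp: homp_def ev_smult)
qed

lemma pf_sum: "finite D \<Longrightarrow> (\<forall>x\<in>D. pf d N n (Fs x)) \<Longrightarrow> pf d N n (\<lambda>A. \<Sum>x\<in>D. Fs x A)"
proof (induction D rule: finite_induct)
  case empty then show ?case by (simp add: pf_zero)
next
  case (insert x F) then show ?case using pf_add[of d N n "Fs x"] by simp
qed

definition pmul :: "(complex \<times> nat list list) list \<Rightarrow> (complex \<times> nat list list) list \<Rightarrow> (complex \<times> nat list list) list" where
  "pmul xs ys = concat (map (\<lambda>(c, Is). map (\<lambda>(c', Js). (c * c', Is @ Js)) ys) xs)"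

lemma ev_pmul: "ev (pmul xs ys) A = ev xs A * ev ys A"
proof (induction xs)
  case Nil then show ?case by (simp add: pmul_def)
next
  case (Cons x xs)
  obtain c Is where x: "x = (c, Is)" by fastforce
  have "ev (map (\<lambda>(c', Js). (c * c', Is @ Js)) ys) A = c * (\<Prod>I\<leftarrow>Is. pluecker I A) * ev ys A"
    by (induction ys) (auto simp: algebra_simps)
  then show ?case using Cons by (simp add: pmul_def x algebra_simps)
qed

lemma pf_mult: "pf d N m F \<Longrightarrow> pf d N n G \<Longrightarrow> pf d N (m + n) (\<lambda>A. F A * G A)"
  unfolding pf_def
proof (elim exE conjE)
  fix xs ys assume h: "homp d N m xs" "F = ev xs" "homp d N n ys" "G = ev ys"
  have "homp d N (m + n) (pmul xs ys)" using h unfolding homp_def pmul_def by fastforce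
  then show "\<exists>xs. homp d N (m + n) xs \<and> (\<lambda>A. F A * G A) = ev xs"
    using h by (intro exI[of _ "pmul xs ys"]) (auto simp: ev_pmul)
qed

lemma pf_one: "pf d N 0 (\<lambda>A. 1)"
  unfolding pf_def homp_def by (rule exI[of _ "[(1, [])]"]) (auto simp: fun_eq_iff)

lemma pf_pluecker: "J \<in> Iseq d N \<Longrightarrow> pf d N 1 (pluecker J)"
  unfolding pf_def homp_def by (rule exI[of _ "[(1, [J])]"]) (auto simp: fun_eq_iff)

lemma pf_prod_list: "(\<forall>I\<in>set Is. pf d N 1 (Fs I)) \<Longrightarrow> pf d N (length Is) (\<lambda>A. \<Prod>I\<leftarrow>Is. Fs I A)"
proof (induction Is)
  case Nil then show ?case using pf_one by simp
next
  case (Cons a Is) then show ?case using pf_mult[of d N 1 "Fs a" "length Is"] by simp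
qed


definition rowsmat :: "nat list \<Rightarrow> cmat \<Rightarrow> complex mat" where
  "rowsmat I A = mat (length I) (length I) (\<lambda>(r, k). A (I ! r - 1) k)"

lemma rowsmat_carrier: "rowsmat I A \<in> carrier_mat (length I) (length I)"
  by (simp add: rowsmat_def)

lemma pluecker_det: "pluecker I A = det (rowsmat I A)"
proof -
  let ?n = "length I"
  have "det (rowsmat I A) = (\<Sum>p\<in>{p. p permutes {0..<?n}}. signof p * (\<Prod>i = 0..<?n. rowsmat I A $$ (i, p i)))"
    by (rule det_def'[OF rowsmat_carrier])
  also have "\<dots> = (\<Sum>p\<in>{p. p permutes {..<?n}}. of_int (sign p) * (\<Prod>i<?n. A (I ! i - 1) (p i)))"
  proof (rule sum.cong)
    show "{p. p permutes {0..<?n}} = {p. p permutes {..<?n}}" by (simp add: atLeast0LessThan)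
  next
    fix p assume "p \<in> {p. p permutes {..<?n}}"
    then have p: "p permutes {..<?n}" by simp
    have pl: "\<And>x. x < ?n \<Longrightarrow> p x < ?n" using permutes_in_image[OF p] by auto
    have "(\<Prod>i = 0..<?n. rowsmat I A $$ (i, p i)) = (\<Prod>i<?n. A (I ! i - 1) (p i))"
      unfolding atLeast0LessThan
      by (rule prod.cong, simp, simp add: rowsmat_def pl)
    then show "signof p * (\<Prod>i = 0..<?n. rowsmat I A $$ (i, p i)) = of_int (sign p) * (\<Prod>i<?n. A (I ! i - 1) (p i))"
      by simp
  qed
  finally show ?thesis unfolding pluecker_def by simp
qed

lemma pluecker_dup:
  assumes "i < length J" "j < length J" "i \<noteq> j" "J ! i = J ! j"
  shows "pluecker J A = 0"
  unfolding pluecker_det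
proof (rule det_identical_rows[OF rowsmat_carrier assms(3,1,2)])
  show "row (rowsmat J A) i = row (rowsmat J A) j"
    using assms by (auto simp: rowsmat_def row_def)
qed

lemma pluecker_perm:
  assumes p: "p permutes {..<length J'}" and J: "J = permute_list p J'"
  shows "pluecker J A = of_int (sign p) * pluecker J' A"
proof -
  let ?n = "length J'"
  have p': "p permutes {0..<?n}" using p by (simp add: atLeast0LessThan)
  have "rowsmat J A = mat ?n ?n (\<lambda>(i, j). rowsmat J' A $$ (p i, j))"
  proof -
    have pl: "\<And>x. x < ?n \<Longrightarrow> p x < ?n" using permutes_in_image[OF p] by auto
    show ?thesis unfolding J by (rule eq_matI) (auto simp: rowsmat_def permute_list_nth[OF p] pl)
  qed
  then show ?thesis unfolding pluecker_det using det_permute_rows[OF rowsmat_carrier p'] by simp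
qed

lemma pf_pluecker_any:
  assumes l: "length J = d" and s: "set J \<subseteq> {1..N}"
  shows "pf d N 1 (pluecker J)"
proof (cases "distinct J")
  case True
  define J' where "J' = sort J"
  have J': "J' \<in> Iseq d N" unfolding J'_def Iseq_def using True l s
    by (auto simp: strict_sorted_iff)
  obtain p where p: "p permutes {..<length J'}" "permute_list p J' = J"
    using mset_eq_permutation[of J J'] unfolding J'_def by auto
  have "pluecker J = (\<lambda>A. of_int (sign p) * pluecker J' A)"
    using pluecker_perm[OF p(1) p(2)[symmetric]] by auto
  then show ?thesis using pf_smult[OF pf_pluecker[OF J']] by simp
next
  case False
  then obtain i j where "i < length J" "j < length J" "i \<noteq> j" "J ! i = J ! j"
    by (auto simp: distinct_conv_nth)
  then have "pluecker J = (\<lambda>A. 0)" using pluecker_dup by blast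
  then show ?thesis using pf_zero by simp
qed

lemma pluecker_mmult:
  "pluecker I (mmult N g A) = (\<Sum>f\<in>PiE {..<length I} (\<lambda>_. {..<N}).
      (\<Prod>r<length I. g (I ! r - 1) (f r)) * pluecker (map (\<lambda>r. f r + 1) [0..<length I]) A)"
proof -
  let ?n = "length I" and ?P = "PiE {..<length I} (\<lambda>_. {..<N})" and ?S = "{\<sigma>. \<sigma> permutes {..<length I}}"
  have "pluecker I (mmult N g A) = (\<Sum>\<sigma>\<in>?S. of_int (sign \<sigma>) * (\<Prod>r<?n. \<Sum>j<N. g (I ! r - 1) j * A j (\<sigma> r)))"
    unfolding pluecker_def mmult_def by simp
  also have "\<dots> = (\<Sum>\<sigma>\<in>?S. \<Sum>f\<in>?P. of_int (sign \<sigma>) * ((\<Prod>r<?n. g (I ! r - 1) (f r)) * (\<Prod>r<?n. A (f r) (\<sigma> r))))"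
    by (rule sum.cong[OF refl]) (simp add: prod_sum_PiE sum_distrib_left prod.distrib)
  also have "\<dots> = (\<Sum>f\<in>?P. \<Sum>\<sigma>\<in>?S. of_int (sign \<sigma>) * ((\<Prod>r<?n. g (I ! r - 1) (f r)) * (\<Prod>r<?n. A (f r) (\<sigma> r))))"
    by (rule sum.swap)
  also have "\<dots> = (\<Sum>f\<in>?P. (\<Prod>r<?n. g (I ! r - 1) (f r)) * pluecker (map (\<lambda>r. f r + 1) [0..<?n]) A)"
  proof (rule sum.cong[OF refl])
    fix f
    have "pluecker (map (\<lambda>r. f r + 1) [0..<?n]) A = (\<Sum>\<sigma>\<in>?S. of_int (sign \<sigma>) * (\<Prod>r<?n. A (f r) (\<sigma> r)))"
      unfolding pluecker_def by simp
    then show "(\<Sum>\<sigma>\<in>?S. of_int (sign \<sigma>) * ((\<Prod>r<?n. g (I ! r - 1) (f r)) * (\<Prod>r<?n. A (f r) (\<sigma> r)))) =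
      (\<Prod>r<?n. g (I ! r - 1) (f r)) * pluecker (map (\<lambda>r. f r + 1) [0..<?n]) A"
      by (simp add: sum_distrib_left algebra_simps)
  qed
  finally show ?thesis .
qed

lemma pf_comp1:
  assumes "length I = d"
  shows "pf d N 1 (\<lambda>A. pluecker I (mmult N g A))"
proof -
  have "pf d N 1 (\<lambda>A. \<Sum>f\<in>PiE {..<length I} (\<lambda>_. {..<N}).
      (\<Prod>r<length I. g (I ! r - 1) (f r)) * pluecker (map (\<lambda>r. f r + 1) [0..<length I]) A)"
  proof (rule pf_sum)
    show "finite (PiE {..<length I} (\<lambda>_. {..<N}))" by (simp add: finite_PiE)
    show "\<forall>f\<in>PiE {..<length I} (\<lambda>_. {..<N}). pf d N 1 (\<lambda>A. (\<Prod>r<length I. g (I ! r - 1) (f r)) *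
        pluecker (map (\<lambda>r. f r + 1) [0..<length I]) A)"
    proof
      fix f assume f: "f \<in> PiE {..<length I} (\<lambda>_. {..<N})"
      have "set (map (\<lambda>r. f r + 1) [0..<length I]) \<subseteq> {1..N}"
        using f by (auto simp: PiE_def Pi_def Suc_leI)
      then have "pf d N 1 (pluecker (map (\<lambda>r. f r + 1) [0..<length I]))"
        using pf_pluecker_any assms by simp
      then show "pf d N 1 (\<lambda>A. (\<Prod>r<length I. g (I ! r - 1) (f r)) * pluecker (map (\<lambda>r. f r + 1) [0..<length I]) A)"
        by (rule pf_smult)
    qed
  qed
  then show ?thesis unfolding pluecker_mmult[symmetric] .
qed

lemma pf_comp:
  assumes "pf d N n F" shows "pf d N n (\<lambda>A. F (mmult N g A))"
proof -
  obtain xs where xs: "homp d N n xs" "F = ev xs" using assms unfolding pf_def by blast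
  have "pf d N n (\<lambda>A. ev xs (mmult N g A))" using xs(1)
  proof (induction xs)
    case Nil then show ?case using pf_zero by simp
  next
    case (Cons x xs)
    obtain c Is where x: "x = (c, Is)" by fastforce
    have h: "length Is = n" "\<forall>I\<in>set Is. I \<in> Iseq d N" "homp d N n xs"
      using Cons.prems x unfolding homp_def by auto
    have "pf d N (length Is) (\<lambda>A. \<Prod>I\<leftarrow>Is. pluecker I (mmult N g A))"
      by (rule pf_prod_list) (use h(2) pf_comp1 in \<open>auto simp: Iseq_def\<close>)
    then have "pf d N n (\<lambda>A. c * (\<Prod>I\<leftarrow>Is. pluecker I (mmult N g A)))" using h(1) pf_smult by simp
    then show ?case using pf_add Cons.IH[OF h(3)] x by simp
  qed
  then show ?thesis using xs(2) by simp
qed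

lemma pluecker_scale: "pluecker I (\<lambda>i k. t * A i k) = t ^ length I * pluecker I A"
  unfolding pluecker_def by (simp add: prod.distrib sum_distrib_left algebra_simps)

lemma ev_scale:
  assumes "homp d N n xs" shows "ev xs (\<lambda>i k. t * A i k) = t ^ (d * n) * ev xs A"
  using assms
proof (induction xs)
  case Nil then show ?case by simp
next
  case (Cons x xs)
  obtain c Is where x: "x = (c, Is)" by fastforce
  have h: "length Is = n" "\<forall>I\<in>set Is. length I = d" "homp d N n xs"
    using Cons.prems x unfolding homp_def Iseq_def by auto
  have "(\<Prod>I\<leftarrow>Is. pluecker I (\<lambda>i k. t * A i k)) = t ^ (d * length Is) * (\<Prod>I\<leftarrow>Is. pluecker I A)"
    using h(2) by (induction Is) (auto simp: pluecker_scale power_add algebra_simps)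
  then show ?case using Cons.IH[OF h(3)] x h(1) by (simp add: algebra_simps)
qed


definition rs :: "nat list \<Rightarrow> nat \<Rightarrow> nat \<Rightarrow> (cmat \<Rightarrow> complex) \<Rightarrow> (cmat \<Rightarrow> complex)" where
  "rs w d N F = (\<lambda>A. if A \<in> schubert_frames w d N then F A else 0)"

definition Vn :: "nat list \<Rightarrow> nat \<Rightarrow> nat \<Rightarrow> nat \<Rightarrow> (cmat \<Rightarrow> complex) set" where
  "Vn w d N n = {rs w d N F | F. pf d N n F}"

definition sc :: "nat \<Rightarrow> complex \<Rightarrow> cmat" where
  "sc N t = (\<lambda>i k. if i = k \<and> i < N then t else 0)"

lemma coord_ring_rs: "coord_ring w d N = {rs w d N F | F. poly_fun d N F}"
  unfolding coord_ring_def rs_def by simp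

lemma schubert_supported: "A \<in> schubert_frames w d N \<Longrightarrow> supported N d A"
  unfolding schubert_frames_def by simp

lemma mmult_sc: "supported N d A \<Longrightarrow> mmult N (sc N t) A = (\<lambda>i k. t * A i k)"
proof (intro ext)
  fix i k assume A: "supported N d A"
  show "mmult N (sc N t) A i k = t * A i k"
  proof (cases "i < N")
    case True
    then have "mmult N (sc N t) A i k = (\<Sum>j<N. if j = i then t * A j k else 0)"
      unfolding mmult_def sc_def by (intro sum.cong) auto
    also have "\<dots> = t * A i k" using True by (simp add: sum.delta)
    finally show ?thesis .
  next
    case False
    then show ?thesis using A unfolding mmult_def sc_def supported_def by auto
  qed
qed

lemma act_rs:
  assumes st: "ls_stable w d N G" and g: "g \<in> G"
  shows "act w d N g (rs w d N F) = rs w d N (\<lambda>A. F (mmult N g A))"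
  using st g unfolding act_def rs_def ls_stable_def by (auto simp: fun_eq_iff)

lemma side_inst:
  assumes st: "ls_stable w d N G" and scG: "\<And>t. t \<noteq> 0 \<Longrightarrow> sc N t \<in> G" and d: "0 < d"
  shows "side (coord_ring w d N) (act w d N) G (Vn w d N) (sc N) d"
proof
  fix n
  show "Vn w d N n \<subseteq> coord_ring w d N" unfolding Vn_def coord_ring_rs using pf_poly by blast
  show "(\<lambda>A. 0) \<in> Vn w d N n" unfolding Vn_def
    by (rule CollectI, rule exI[of _ "\<lambda>A. 0"]) (auto simp: pf_zero rs_def)
next
  fix f n h assume "f \<in> Vn w d N n" "h \<in> Vn w d N n"
  then obtain F H where "f = rs w d N F" "h = rs w d N H" "pf d N n F" "pf d N n H" unfolding Vn_def by blast
  then show "(\<lambda>A. f A + h A) \<in> Vn w d N n" unfolding Vn_def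
    by (intro CollectI exI[of _ "\<lambda>A. F A + H A"]) (auto simp: pf_add rs_def)
next
  fix f n c assume "f \<in> Vn w d N n"
  then obtain F where "f = rs w d N F" "pf d N n F" unfolding Vn_def by blast
  then show "(\<lambda>A. c * f A) \<in> Vn w d N n" unfolding Vn_def
    by (intro CollectI exI[of _ "\<lambda>A. c * F A"]) (auto simp: pf_smult rs_def)
next
  fix g f n assume g: "g \<in> G" and "f \<in> Vn w d N n"
  then obtain F where "f = rs w d N F" "pf d N n F" unfolding Vn_def by blast
  then show "act w d N g f \<in> Vn w d N n" unfolding Vn_def
    using act_rs[OF st g] pf_comp by blast
next
  fix f assume "f \<in> coord_ring w d N"
  then obtain F where F: "f = rs w d N F" "poly_fun d N F" unfolding coord_ring_rs by blast
  obtain M Fs where M: "\<forall>n. pf d N n (Fs n)" "F = (\<lambda>A. \<Sum>n<M. Fs n A)" using poly_decomp[OF F(2)] by blast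
  show "\<exists>M fs. (\<forall>n<M. fs n \<in> Vn w d N n) \<and> f = (\<lambda>A. \<Sum>n<M. fs n A)"
    by (rule exI[of _ M], rule exI[of _ "\<lambda>n. rs w d N (Fs n)"]) (use F M in \<open>auto simp: Vn_def rs_def fun_eq_iff\<close>)
next
  fix t :: complex assume "t \<noteq> 0" then show "sc N t \<in> G" by (rule scG)
next
  fix t :: complex and f n assume t: "t \<noteq> 0" and "f \<in> Vn w d N n"
  then obtain F where F: "f = rs w d N F" "pf d N n F" unfolding Vn_def by blast
  obtain xs where xs: "homp d N n xs" "F = ev xs" using F(2) unfolding pf_def by blast
  show "act w d N (sc N t) f = (\<lambda>A. t ^ (d * n) * f A)"
    unfolding F(1) act_rs[OF st scG[OF t]]
    by (auto simp: rs_def fun_eq_iff mmult_sc[OF schubert_supported] xs ev_scale[OF xs(1)])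
next
  fix g f h show "act w d N g (\<lambda>A. f A + h A) = (\<lambda>A. act w d N g f A + act w d N g h A)"
    unfolding act_def by auto
next
  fix g c f show "act w d N g (\<lambda>A. c * f A) = (\<lambda>A. c * act w d N g f A)"
    unfolding act_def by auto
next
  show "0 < d" by (rule d)
qed

lemma orbit_sub: "orbit_frames w d N \<subseteq> schubert_frames w d N"
  unfolding schubert_frames_def orbit_frames_def supported_def by auto

lemma rs_eqI:
  assumes "poly_fun d N F" "poly_fun d N H" "\<And>B. B \<in> orbit_frames w d N \<Longrightarrow> F B = H B"
  shows "rs w d N F = rs w d N H"
proof -
  have "poly_fun d N (\<lambda>A. F A + (-1) * H A)"
  proof -
    obtain xs ys where "(\<forall>(c, Is)\<in>set xs. \<forall>I\<in>set Is. I \<in> Iseq d N)" "F = ev xs"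
      "(\<forall>(c, Is)\<in>set ys. \<forall>I\<in>set Is. I \<in> Iseq d N)" "H = ev ys"
      using assms(1,2) unfolding poly_fun_ev by blast
    then show ?thesis unfolding poly_fun_ev
      using ev_smult[of "-1" ys] by (intro exI[of _ "xs @ map (\<lambda>(c, Is). (-1 * c, Is)) ys"]) (auto simp: fun_eq_iff)
  qed
  moreover have "\<forall>B\<in>orbit_frames w d N. F B + (-1) * H B = 0" using assms(3) by simp
  ultimately have "\<And>A. A \<in> schubert_frames w d N \<Longrightarrow> F A + (-1) * H A = 0"
    unfolding schubert_frames_def by blast
  then show ?thesis unfolding rs_def by (auto simp: fun_eq_iff)
qed

lemma rs_eq_orbit:
  assumes "rs w d N F = rs w d N H" "B \<in> orbit_frames w d N" shows "F B = H B"
  using assms orbit_sub unfolding rs_def by (metis (mono_tags) subsetD)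


definition liftI :: "nat \<Rightarrow> nat list \<Rightarrow> nat list" where
  "liftI p J = [1..<p+1] @ map (\<lambda>x. x + p) J"

lemma liftI_len[simp]: "length (liftI p J) = p + length J" by (simp add: liftI_def)
lemma liftI_nth1: "r < p \<Longrightarrow> liftI p J ! r = r + 1"
  unfolding liftI_def by (simp add: nth_append nth_upt del: upt_Suc)
lemma liftI_nth2: "p \<le> r \<Longrightarrow> r < p + length J \<Longrightarrow> liftI p J ! r = J ! (r - p) + p"
  unfolding liftI_def by (simp add: nth_append del: upt_Suc)

lemma liftI_inj: "liftI p J = liftI p J' \<Longrightarrow> J = J'"
proof -
  assume "liftI p J = liftI p J'"
  then have "map (\<lambda>x. x + p) J = map (\<lambda>x. x + p) J'" by (simp add: liftI_def)
  moreover have "inj (\<lambda>x::nat. x + p)" by (simp add: inj_def)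
  ultimately show "J = J'" by (simp add: inj_map_eq_map)
qed

lemma Iseq_nth_ge: assumes "I \<in> Iseq d N" "i < d" shows "i + 1 \<le> I ! i"
  using assms(2)
proof (induction i)
  case 0
  have "I ! 0 \<in> set I" using assms 0 unfolding Iseq_def by auto
  then show ?case using assms(1) unfolding Iseq_def by auto
next
  case (Suc i)
  then have "I ! i < I ! Suc i" using assms(1) unfolding Iseq_def by (auto intro: sorted_wrt_nth_less)
  then show ?case using Suc by simp
qed

lemma Iseq_nth_le: assumes "I \<in> Iseq d N" "i < d" shows "I ! i \<le> N"
proof -
  have "I ! i \<in> set I" using assms unfolding Iseq_def by auto
  then show ?thesis using assms(1) unfolding Iseq_def by auto
qed

lemma Iseq_lt: assumes "I \<in> Iseq d N" "i < j" "j < d" shows "I ! i < I ! j"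
  using assms unfolding Iseq_def by (auto intro: sorted_wrt_nth_less)

lemma Iseq_gap: assumes "I \<in> Iseq d N" "i \<le> j" "j < d" shows "I ! i + (j - i) \<le> I ! j"
  using assms(2,3)
proof (induction j)
  case 0 then show ?case by simp
next
  case (Suc j)
  show ?case
  proof (cases "i = Suc j")
    case True then show ?thesis by simp
  next
    case False
    then have "i \<le> j" using Suc by simp
    then have "I ! i + (j - i) \<le> I ! j" using Suc by simp
    moreover have "I ! j < I ! Suc j" using Iseq_lt[OF assms(1)] Suc by simp
    ultimately show ?thesis using \<open>i \<le> j\<close> by simp
  qed
qed

lemma liftI_Iseq:
  assumes J: "J \<in> Iseq d' N'" and pl: "p + N' \<le> N"
  shows "liftI p J \<in> Iseq (p + d') N"
proof -
  have lJ: "length J = d'" using J by (simp add: Iseq_def)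
  have "sorted_wrt (<) (liftI p J)"
    unfolding sorted_wrt_iff_nth_less
  proof (intro allI impI)
    fix i j assume ij: "i < j" "j < length (liftI p J)"
    show "liftI p J ! i < liftI p J ! j"
    proof (cases "j < p")
      case True then show ?thesis using ij by (simp add: liftI_nth1)
    next
      case False
      have jv: "liftI p J ! j = J ! (j - p) + p" using False ij lJ by (simp add: liftI_nth2)
      show ?thesis
      proof (cases "i < p")
        case True
        have "j - p < d'" using False ij lJ by simp
        then have "1 \<le> J ! (j - p)" using Iseq_nth_ge[OF J, of "j - p"] by simp
        then show ?thesis using True jv by (simp add: liftI_nth1)
      next
        case False
        then have "J ! (i - p) < J ! (j - p)" using Iseq_lt[OF J, of "i - p" "j - p"] ij lJ \<open>\<not> j < p\<close> by simp
        then show ?thesis using False jv ij lJ by (simp add: liftI_nth2)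
      qed
    qed
  qed
  moreover have "\<forall>x\<in>set (liftI p J). 1 \<le> x \<and> x \<le> N"
  proof
    fix x assume "x \<in> set (liftI p J)"
    then obtain r where r: "r < p + d'" "x = liftI p J ! r" by (auto simp: in_set_conv_nth lJ)
    show "1 \<le> x \<and> x \<le> N"
    proof (cases "r < p")
      case True then show ?thesis using r pl by (simp add: liftI_nth1)
    next
      case False
      then have "x = J ! (r - p) + p" using r lJ by (simp add: liftI_nth2)
      moreover have rp: "r - p < d'" using r False by simp
      moreover have "J ! (r - p) \<le> N'" "1 \<le> J ! (r - p)" using Iseq_nth_le[OF J rp] Iseq_nth_ge[OF J rp] by auto
      ultimately show ?thesis using pl by simp
    qed
  qed
  ultimately show ?thesis by (simp add: Iseq_def lJ)
qed

locale wsetup =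
  fixes w :: "nat list" and d N :: nat
  assumes wI: "w \<in> Iseq d N" and d1: "1 \<le> d" and dN: "d < N" and wne: "w \<noteq> [1..<d+1]"
begin

abbreviation "p \<equiv> red_p w"
abbreviation "l \<equiv> last w"
abbreviation "N' \<equiv> red_N w"
abbreviation "d' \<equiv> red_d w"
abbreviation "w' \<equiv> red_w w"

lemma len: "length w = d" using wI by (simp add: Iseq_def)

lemma l_eq: "l = w ! (d - 1)"
proof -
  have "w \<noteq> []" using len d1 by auto
  then show ?thesis using len by (simp add: last_conv_nth)
qed

lemma w_le_l: "i < d \<Longrightarrow> w ! i \<le> l"
proof -
  assume i: "i < d"
  then have "i = d - 1 \<or> i < d - 1" by arith
  then show ?thesis
  proof
    assume "i < d - 1" then show ?thesis using Iseq_lt[OF wI, of i "d - 1"] l_eq d1 by simp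
  qed (use l_eq in simp)
qed

lemma l_le: "l \<le> N" using Iseq_nth_le[OF wI, of "d - 1"] l_eq d1 by simp

definition "Pp q \<longleftrightarrow> q \<le> length w \<and> (\<forall>i. 1 \<le> i \<and> i \<le> q \<longrightarrow> w ! (i - 1) = i)"

lemma p_is: "p = Greatest Pp" unfolding red_p_def Pp_def by simp

lemma p_prop: "p \<le> d \<and> (\<forall>i. 1 \<le> i \<and> i \<le> p \<longrightarrow> w ! (i - 1) = i)"
proof -
  have "Pp (Greatest Pp)" by (rule GreatestI_nat[of Pp 0 "length w"]) (auto simp: Pp_def)
  then show ?thesis unfolding p_is Pp_def using len by simp
qed

lemma p_first: "i < p \<Longrightarrow> w ! i = i + 1"
  using p_prop[THEN conjunct2, rule_format, of "i + 1"] by simp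

lemma p_lt: "p < d"
proof (rule ccontr)
  assume "\<not> p < d"
  then have "p = d" using p_prop by simp
  then have "w = [1..<d+1]" using p_first len by (intro nth_equalityI) (auto simp: nth_upt simp del: upt_Suc)
  with wne show False by simp
qed

lemma wp: "p + 1 < w ! p"
proof -
  have ge: "p + 1 \<le> w ! p" using Iseq_nth_ge[OF wI p_lt] .
  have "w ! p \<noteq> p + 1"
  proof
    assume eq: "w ! p = p + 1"
    have "p + 1 \<le> d \<and> (\<forall>i. 1 \<le> i \<and> i \<le> p + 1 \<longrightarrow> w ! (i - 1) = i)"
    proof (intro conjI allI impI)
      show "p + 1 \<le> d" using p_lt by simp
    next
      fix i assume "1 \<le> i \<and> i \<le> p + 1"
      then show "w ! (i - 1) = i" using eq p_first[of "i - 1"] by (cases "i = p + 1") auto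
    qed
    then have "Pp (p + 1)" unfolding Pp_def using len by simp
    then have "p + 1 \<le> Greatest Pp" by (rule Greatest_le_nat[of Pp _ "length w"]) (auto simp: Pp_def)
    then have "p + 1 \<le> p" unfolding p_is .
    then show False by simp
  qed
  with ge show ?thesis by simp
qed

lemma l_ge: "d + 1 \<le> l"
proof -
  have "w ! p + (d - 1 - p) \<le> w ! (d - 1)" using Iseq_gap[OF wI, of p "d - 1"] p_lt by simp
  then show ?thesis using wp l_eq p_lt by simp
qed

lemma N'_eq: "N' = l - p" by (simp add: red_N_def)
lemma d'_eq: "d' = d - p" by (simp add: red_d_def len)
lemma pN': "p + N' = l" using N'_eq l_ge p_lt by simp
lemma pd': "p + d' = d" using d'_eq p_lt by simp
lemma d'_lt: "d' < N'" using N'_eq d'_eq l_ge p_lt by simp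
lemma d'_pos: "0 < d'" using d'_eq p_lt by simp

lemma w'_len: "length w' = d'" by (simp add: red_w_def d'_eq len)
lemma w'_nth: "k < d' \<Longrightarrow> w' ! k = w ! (k + p) - p"
  by (simp add: red_w_def d'_eq len add.commute)

lemma w_gt_p: "p \<le> k \<Longrightarrow> k < d \<Longrightarrow> p + 1 < w ! k"
  using wp Iseq_gap[OF wI, of p k] by simp

lemma w'I: "w' \<in> Iseq d' N'"
proof -
  have "sorted_wrt (<) w'"
    unfolding sorted_wrt_iff_nth_less
  proof (intro allI impI)
    fix i j assume "i < j" "j < length w'"
    then show "w' ! i < w' ! j" using w'_nth w'_len Iseq_lt[OF wI, of "i + p" "j + p"] w_gt_p[of "i + p"] pd'
      by simp
  qed
  moreover have "\<forall>x\<in>set w'. 1 \<le> x \<and> x \<le> N'"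
  proof
    fix x assume "x \<in> set w'"
    then obtain k where k: "k < d'" "x = w' ! k" by (auto simp: in_set_conv_nth w'_len)
    then have "x = w ! (k + p) - p" "p + 1 < w ! (k + p)" "w ! (k + p) \<le> l"
      using w'_nth w_gt_p[of "k + p"] w_le_l[of "k + p"] pd' by auto
    then show "1 \<le> x \<and> x \<le> N'" using N'_eq by auto
  qed
  ultimately show ?thesis by (simp add: Iseq_def w'_len)
qed

lemma liftI_Iseq': "J \<in> Iseq d' N' \<Longrightarrow> liftI p J \<in> Iseq d N"
  using liftI_Iseq[of J d' N' p N] pN' l_le pd' by simp

lemma liftI_le_l: "J \<in> Iseq d' N' \<Longrightarrow> r < d \<Longrightarrow> liftI p J ! r \<le> l"
proof -
  assume J: "J \<in> Iseq d' N'" and r: "r < d"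
  have lJ: "length J = d'" using J by (simp add: Iseq_def)
  show ?thesis
  proof (cases "r < p")
    case True then show ?thesis using liftI_nth1 pN' by simp
  next
    case False
    then have "liftI p J ! r = J ! (r - p) + p" using r lJ pd' by (simp add: liftI_nth2)
    moreover have "J ! (r - p) \<le> N'" using Iseq_nth_le[OF J] r False pd' by simp
    ultimately show ?thesis using pN' by simp
  qed
qed

lemma unlift:
  assumes I: "I \<in> Iseq d N" and first: "\<forall>r<p. I ! r = r + 1" and bd: "\<forall>r<d. I ! r \<le> l"
  shows "\<exists>J\<in>Iseq d' N'. I = liftI p J"
proof -
  have lI: "length I = d" using I by (simp add: Iseq_def)
  define J where "J = map (\<lambda>x. x - p) (drop p I)"
  have lJ: "length J = d'" unfolding J_def using lI d'_eq by simp
  have Jn: "k < d' \<Longrightarrow> J ! k = I ! (k + p) - p" for k unfolding J_def using lI pd' p_lt by (simp add: add.commute)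
  have gtp: "k < d' \<Longrightarrow> p < I ! (k + p)" for k
  proof -
    assume k: "k < d'"
    show ?thesis
    proof (cases "p = 0")
      case True then show ?thesis using Iseq_nth_ge[OF I, of k] k pd' by simp
    next
      case False
      have "p - 1 < p" using False by simp
      then have "I ! (p - 1) = p - 1 + 1" using first by blast
      then have "I ! (p - 1) = p" using False by simp
      moreover have "I ! (p - 1) < I ! (k + p)" using Iseq_lt[OF I, of "p - 1" "k + p"] False k pd' by simp
      ultimately show ?thesis by simp
    qed
  qed
  have JI: "J \<in> Iseq d' N'"
  proof -
    have "sorted_wrt (<) J"
      unfolding sorted_wrt_iff_nth_less
    proof (intro allI impI)
      fix i j assume "i < j" "j < length J"
      then show "J ! i < J ! j" using Jn lJ Iseq_lt[OF I, of "i + p" "j + p"] gtp[of i] gtp[of j] pd' by simp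
    qed
    moreover have "\<forall>x\<in>set J. 1 \<le> x \<and> x \<le> N'"
    proof
      fix x assume "x \<in> set J"
      then obtain k where k: "k < d'" "x = J ! k" by (auto simp: in_set_conv_nth lJ)
      then have "x = I ! (k + p) - p" "p < I ! (k + p)" "I ! (k + p) \<le> l"
        using Jn gtp[of k] bd[rule_format, of "k + p"] pd' by auto
      then show "1 \<le> x \<and> x \<le> N'" using N'_eq by auto
    qed
    ultimately show ?thesis by (simp add: Iseq_def lJ)
  qed
  have "I = liftI p J"
  proof (rule nth_equalityI)
    show "length I = length (liftI p J)" using lI lJ pd' by simp
  next
    fix r assume r: "r < length I"
    show "I ! r = liftI p J ! r"
    proof (cases "r < p")
      case True then show ?thesis using first by (simp add: liftI_nth1)
    next
      case False
      then have rr: "r - p < d'" using r lI pd' by simp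
      have "liftI p J ! r = J ! (r - p) + p" using False r lI lJ pd' by (simp add: liftI_nth2)
      also have "\<dots> = I ! (r - p + p) - p + p" using Jn[OF rr] by simp
      also have "\<dots> = I ! r" using gtp[OF rr] False by simp
      finally show ?thesis by simp
    qed
  qed
  with JI show ?thesis by blast
qed

end


definition dtop :: "nat \<Rightarrow> cmat \<Rightarrow> complex" where
  "dtop p C = det (mat p p (\<lambda>(i, k). C i k))"

definition shift :: "nat \<Rightarrow> cmat \<Rightarrow> cmat" where
  "shift p C = (\<lambda>i k. C (i + p) (k + p))"

definition LLZ :: "nat \<Rightarrow> cmat \<Rightarrow> bool" where
  "LLZ p C \<longleftrightarrow> (\<forall>j k. p \<le> j \<longrightarrow> k < p \<longrightarrow> C j k = 0)"

definition tom :: "nat \<Rightarrow> cmat \<Rightarrow> complex mat" where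
  "tom n g = mat n n (\<lambda>(i, k). g i k)"

definition liftxs :: "nat \<Rightarrow> (complex \<times> nat list list) list \<Rightarrow> (complex \<times> nat list list) list" where
  "liftxs p xs = map (\<lambda>(c, Is). (c, map (liftI p) Is)) xs"

lemma pluecker_cong:
  assumes "\<forall>r<length I. \<forall>k<length I. A (I ! r - 1) k = B (I ! r - 1) k"
  shows "pluecker I A = pluecker I B"
  unfolding pluecker_def
proof (rule sum.cong[OF refl])
  fix \<sigma> assume "\<sigma> \<in> {\<sigma>. \<sigma> permutes {..<length I}}"
  then have s: "\<And>r. r < length I \<Longrightarrow> \<sigma> r < length I" using permutes_in_image by fastforce
  show "of_int (sign \<sigma>) * (\<Prod>r<length I. A (I ! r - 1) (\<sigma> r)) = of_int (sign \<sigma>) * (\<Prod>r<length I. B (I ! r - 1) (\<sigma> r))"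
    using assms s by (intro arg_cong[where f="\<lambda>x. _ * x"] prod.cong) auto
qed

lemma pluecker_agree:
  assumes I: "I \<in> Iseq d N" and ag: "\<forall>i<N. \<forall>k<d. A i k = B i k"
  shows "pluecker I A = pluecker I B"
proof (rule pluecker_cong, intro allI impI)
  fix r k assume r: "r < length I" and k: "k < length I"
  have l: "length I = d" using I by (simp add: Iseq_def)
  have "I ! r - 1 < N" using Iseq_nth_le[OF I, of r] Iseq_nth_ge[OF I, of r] r l by simp
  then show "A (I ! r - 1) k = B (I ! r - 1) k" using ag k l by simp
qed

lemma ev_agree:
  assumes "homp d N n xs" and ag: "\<forall>i<N. \<forall>k<d. A i k = B i k"
  shows "ev xs A = ev xs B"
  using assms(1)
proof (induction xs)
  case Nil then show ?case by simp
next
  case (Cons x xs)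
  obtain c Is where x: "x = (c, Is)" by fastforce
  have h: "\<forall>I\<in>set Is. I \<in> Iseq d N" "homp d N n xs" using Cons.prems x unfolding homp_def by auto
  have "(\<Prod>I\<leftarrow>Is. pluecker I A) = (\<Prod>I\<leftarrow>Is. pluecker I B)"
    using h(1) pluecker_agree[OF _ ag] by (induction Is) auto
  then show ?case using Cons.IH[OF h(2)] x by simp
qed

lemma pluecker_block:
  assumes C: "LLZ p C" and J: "\<forall>r<length J. 1 \<le> J ! r"
  shows "pluecker (liftI p J) C = dtop p C * pluecker J (shift p C)"
proof -
  let ?m = "length J"
  define A1 where "A1 = mat p p (\<lambda>(i, k). C i k)"
  define A2 where "A2 = mat p ?m (\<lambda>(i, k). C i (k + p))"
  define A4 where "A4 = rowsmat J (shift p C)"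
  have A4c: "A4 \<in> carrier_mat ?m ?m" unfolding A4_def by (rule rowsmat_carrier)
  have A4d[simp]: "dim_row A4 = ?m" "dim_col A4 = ?m" using A4c by auto
  have "rowsmat (liftI p J) C = four_block_mat A1 A2 (0\<^sub>m ?m p) A4"
  proof (rule eq_matI)
    fix i j assume ij: "i < dim_row (four_block_mat A1 A2 (0\<^sub>m ?m p) A4)" "j < dim_col (four_block_mat A1 A2 (0\<^sub>m ?m p) A4)"
    then have i: "i < p + ?m" and j: "j < p + ?m" unfolding A1_def A2_def A4_def by (auto simp: rowsmat_def)
    show "rowsmat (liftI p J) C $$ (i, j) = four_block_mat A1 A2 (0\<^sub>m ?m p) A4 $$ (i, j)"
    proof (cases "i < p")
      case True
      then show ?thesis using i j unfolding A1_def A2_def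
        by (auto simp: rowsmat_def liftI_nth1 index_mat_four_block)
    next
      case False
      have Ji: "1 \<le> J ! (i - p)" using J False i by simp
      have row: "liftI p J ! i - 1 = (J ! (i - p) - 1) + p" using liftI_nth2[of p i J] False i Ji by simp
      show ?thesis
      proof (cases "j < p")
        case True
        then have "C (liftI p J ! i - 1) j = 0" using C row unfolding LLZ_def by simp
        then show ?thesis using False True i j unfolding A1_def A2_def A4_def
          by (auto simp: rowsmat_def index_mat_four_block)
      next
        case False2: False
        have "rowsmat (liftI p J) C $$ (i, j) = C ((J ! (i - p) - 1) + p) ((j - p) + p)"
          using i j False2 row by (simp add: rowsmat_def)
        moreover have "four_block_mat A1 A2 (0\<^sub>m ?m p) A4 $$ (i, j) = A4 $$ (i - p, j - p)"
          using i j False False2 unfolding A1_def A2_def A4_def by (auto simp: rowsmat_def index_mat_four_block)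
        moreover have "A4 $$ (i - p, j - p) = shift p C (J ! (i - p) - 1) (j - p)"
          using i j False False2 unfolding A4_def by (simp add: rowsmat_def)
        ultimately show ?thesis by (simp add: shift_def)
      qed
    qed
  qed (auto simp: A1_def A2_def A4_def rowsmat_def)
  then have "det (rowsmat (liftI p J) C) = det A1 * det A4"
    using det_four_block_mat_lower_left_zero[of A1 p A2 ?m "0\<^sub>m ?m p" A4] A4c
    unfolding A1_def A2_def by simp
  then show ?thesis unfolding pluecker_det dtop_def A1_def A4_def by simp
qed

lemma ev_lift:
  assumes C: "LLZ p C" and xs: "homp d' N' n xs"
  shows "ev (liftxs p xs) C = dtop p C ^ n * ev xs (shift p C)"
  using xs
proof (induction xs)
  case Nil then show ?case by (simp add: liftxs_def)
next
  case (Cons x xs)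
  obtain c Is where x: "x = (c, Is)" by fastforce
  have h: "length Is = n" "\<forall>I\<in>set Is. I \<in> Iseq d' N'" "homp d' N' n xs" using Cons.prems x unfolding homp_def by auto
  have "(\<Prod>I\<leftarrow>map (liftI p) Is. pluecker I C) = dtop p C ^ length Is * (\<Prod>I\<leftarrow>Is. pluecker I (shift p C))"
    using h(2)
  proof (induction Is)
    case Nil then show ?case by simp
  next
    case (Cons I Is)
    have "\<forall>r<length I. 1 \<le> I ! r" using Cons.prems Iseq_nth_ge[of I d' N'] by (auto simp: Iseq_def)
    then show ?case using Cons pluecker_block[OF C] by simp
  qed
  then show ?case using Cons.IH[OF h(3)] x h(1) by (simp add: liftxs_def algebra_simps)
qed

lemma homp_liftxs:
  assumes "homp d' N' n xs" "\<And>J. J \<in> Iseq d' N' \<Longrightarrow> liftI p J \<in> Iseq d N"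
  shows "homp d N n (liftxs p xs)"
  using assms unfolding homp_def liftxs_def by fastforce

lemma tom_carrier: "tom n g \<in> carrier_mat n n" by (simp add: tom_def)

lemma tom_mmult: "tom n (mmult n g h) = tom n g * tom n h"
  by (rule eq_matI) (auto simp: tom_def mmult_def scalar_prod_def atLeast0LessThan intro: sum.cong)

lemma tom_idm: "tom n (idm n) = 1\<^sub>m n"
  by (rule eq_matI) (auto simp: tom_def idm_def)

lemma dtop_tom: "dtop p C = det (tom p C)" by (simp add: dtop_def tom_def)

lemma dtop_mult:
  assumes C: "LLZ p C" and pN: "p \<le> N"
  shows "dtop p (mmult N X C) = dtop p X * dtop p C"
proof -
  have "tom p (mmult N X C) = tom p (mmult p X C)"
  proof (rule eq_matI)
    fix i k assume ik: "i < dim_row (tom p (mmult p X C))" "k < dim_col (tom p (mmult p X C))"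
    then have i: "i < p" and k: "k < p" by (auto simp: tom_def)
    have "(\<Sum>j<N. X i j * C j k) = (\<Sum>j<p. X i j * C j k)"
    proof (rule sum.mono_neutral_right)
      show "\<forall>j\<in>{..<N} - {..<p}. X i j * C j k = 0" using C k unfolding LLZ_def by auto
    qed (use pN in auto)
    then show "tom p (mmult N X C) $$ (i, k) = tom p (mmult p X C) $$ (i, k)"
      using i k by (simp add: tom_def mmult_def)
  qed (auto simp: tom_def)
  then show ?thesis unfolding dtop_tom tom_mmult
    using det_mult[OF tom_carrier tom_carrier] by simp
qed

lemma dtop_idm: "p \<le> N \<Longrightarrow> dtop p (idm N) = 1"
proof -
  assume "p \<le> N"
  then have "tom p (idm N) = tom p (idm p)" by (intro eq_matI) (auto simp: tom_def idm_def)
  then show ?thesis unfolding dtop_tom tom_idm by simp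
qed

lemma mmult_supported: "supported n n g \<Longrightarrow> supported n n h \<Longrightarrow> supported n n (mmult n g h)"
  unfolding supported_def mmult_def by auto

lemma mmult_tom_eq:
  assumes "supported n n g" "supported n n h" "supported n n k" "tom n k = tom n g * tom n h"
  shows "mmult n g h = k"
proof (intro ext)
  fix i j
  show "mmult n g h i j = k i j"
  proof (cases "i < n \<and> j < n")
    case True
    have "tom n (mmult n g h) $$ (i, j) = tom n k $$ (i, j)" using assms(4) tom_mmult by simp
    then show ?thesis using True by (simp add: tom_def)
  next
    case False
    then show ?thesis using assms(1-3) mmult_supported[OF assms(1,2)] unfolding supported_def by auto
  qed
qed

lemma inv_det: "Defs.invertible_mat n g \<Longrightarrow> det (tom n g) \<noteq> 0"
proof -
  assume "Defs.invertible_mat n g"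
  then obtain h where "mmult n g h = idm n" unfolding Defs.invertible_mat_def by blast
  then have "tom n g * tom n h = 1\<^sub>m n" using tom_mmult tom_idm by metis
  then have "det (tom n g * tom n h) = 1" by simp
  then have "det (tom n g) * det (tom n h) = 1" using det_mult[OF tom_carrier[of n g] tom_carrier[of n h]] by simp
  then show ?thesis by auto
qed

definition fromm :: "nat \<Rightarrow> complex mat \<Rightarrow> cmat" where
  "fromm n B = (\<lambda>i k. if i < n \<and> k < n then B $$ (i, k) else 0)"

lemma det_inv:
  assumes s: "supported n n g" and dt: "det (tom n g) \<noteq> 0"
  shows "Defs.invertible_mat n g"
proof -
  have "tom n g \<in> Units (ring_mat TYPE(complex) n b)" by (rule det_non_zero_imp_unit[OF tom_carrier dt])
  then obtain B where B: "B \<in> carrier_mat n n" "B * tom n g = 1\<^sub>m n" "tom n g * B = 1\<^sub>m n"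
    unfolding Units_def ring_mat_def by auto
  define h where "h = fromm n B"
  have hs: "supported n n h" unfolding h_def fromm_def supported_def by auto
  have th: "tom n h = B" using B(1) unfolding h_def fromm_def tom_def by (intro eq_matI) auto
  have isupp: "supported n n (idm n)" unfolding supported_def idm_def by auto
  have "mmult n g h = idm n" by (rule mmult_tom_eq[OF s hs isupp]) (simp add: th tom_idm B)
  moreover have "mmult n h g = idm n" by (rule mmult_tom_eq[OF hs s isupp]) (simp add: th tom_idm B)
  ultimately show ?thesis unfolding Defs.invertible_mat_def using s hs by blast
qed

lemma det_upper:
  assumes "\<forall>i j. j < i \<longrightarrow> b i j = 0"
  shows "det (tom n b) = (\<Prod>i<n. b i i)"
proof -
  have "det (tom n b) = prod_list (diag_mat (tom n b))"
    by (rule det_upper_triangular[of _ n]) (use assms in \<open>auto simp: tom_def intro!: upper_triangularI\<close>)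
  also have "\<dots> = (\<Prod>i<n. b i i)"
    unfolding prod_list_diag_prod by (simp add: tom_def atLeast0LessThan)
  finally show ?thesis .
qed

lemma borel_iff:
  "b \<in> borel n \<longleftrightarrow> supported n n b \<and> (\<forall>i j. j < i \<longrightarrow> b i j = 0) \<and> (\<forall>i<n. b i i \<noteq> 0)"
proof -
  have "\<And>b. (\<forall>i j. j < i \<longrightarrow> b i j = 0) \<Longrightarrow> det (tom n b) \<noteq> 0 \<longleftrightarrow> (\<forall>i<n. b i i \<noteq> 0)"
    using det_upper by (simp, blast)
  then show ?thesis unfolding borel_def using inv_det det_inv Defs.invertible_mat_def by blast
qed


definition fr :: "nat list \<Rightarrow> nat \<Rightarrow> nat \<Rightarrow> cmat \<Rightarrow> cmat" where
  "fr w d N b = (\<lambda>i k. if i < N \<and> k < d then b i (w ! k - 1) else 0)"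

lemma orbit_fr: "orbit_frames w d N = fr w d N ` borel N"
  unfolding orbit_frames_def fr_def by auto

definition upper :: "cmat \<Rightarrow> bool" where "upper b \<longleftrightarrow> (\<forall>i j. j < i \<longrightarrow> b i j = 0)"

lemma borel_upper: "b \<in> borel n \<Longrightarrow> upper b" unfolding borel_def upper_def by auto

definition low :: "nat \<Rightarrow> cmat \<Rightarrow> bool" where "low l C \<longleftrightarrow> (\<forall>j k. l \<le> j \<longrightarrow> C j k = 0)"

context wsetup
begin

lemma fr_LLZ: "upper b \<Longrightarrow> LLZ p (fr w d N b)"
  unfolding LLZ_def fr_def upper_def using p_first p_lt by auto

lemma fr_low: "upper b \<Longrightarrow> low l (fr w d N b)"
  unfolding low_def fr_def upper_def
proof (intro allI impI)
  fix j k assume u: "\<forall>i j. j < i \<longrightarrow> b i j = 0" and j: "l \<le> j"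
  show "(if j < N \<and> k < d then b j (w ! k - 1) else 0) = 0"
  proof (cases "k < d")
    case True
    then have "w ! k - 1 < j" using w_le_l[OF True] Iseq_nth_ge[OF wI True] j by simp
    then show ?thesis using u by simp
  qed simp
qed

lemma fr_dtop: "dtop p (fr w d N b) = dtop p b"
proof -
  have "mat p p (\<lambda>(i, k). fr w d N b i k) = mat p p (\<lambda>(i, k). b i k)"
    using p_first p_lt dN by (intro eq_matI) (auto simp: fr_def)
  then show ?thesis by (simp add: dtop_def)
qed

lemma fr_shift: "i < N' \<Longrightarrow> k < d' \<Longrightarrow> shift p (fr w d N b) i k = fr w' d' N' (principal_sub p N' b) i k"
proof -
  assume i: "i < N'" and k: "k < d'"
  have kd: "k + p < d" using k pd' by simp
  have ip: "i + p < N" using i pN' l_le by simp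
  have g: "p + 1 < w ! (k + p)" using w_gt_p[of "k + p"] kd by simp
  have le: "w ! (k + p) \<le> l" using w_le_l[OF kd] .
  have "w' ! k - 1 < N'" using w'_nth[OF k] g le pN' by simp
  moreover have "w' ! k - 1 + p = w ! (k + p) - 1" using w'_nth[OF k] g by simp
  ultimately show ?thesis using i k kd ip by (simp add: shift_def fr_def principal_sub_def)
qed

lemma vanish:
  assumes b: "upper b" and I: "I \<in> Iseq d N" and nl: "\<not> (\<exists>J\<in>Iseq d' N'. I = liftI p J)"
  shows "pluecker I (fr w d N b) = 0"
proof -
  have lI: "length I = d" using I by (simp add: Iseq_def)
  have ub: "\<And>i j. j < i \<Longrightarrow> b i j = 0" using b unfolding upper_def by blast
  have "\<not> ((\<forall>r<p. I ! r = r + 1) \<and> (\<forall>r<d. I ! r \<le> l))" using unlift[OF I] nl by blast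
  then consider (big) r where "r < d" "l < I ! r" | (gap) r where "r < p" "I ! r \<noteq> r + 1" by force
  then show ?thesis
  proof cases
    case big
    show ?thesis unfolding pluecker_def
    proof (rule sum.neutral, intro ballI)
      fix \<sigma> assume "\<sigma> \<in> {\<sigma>. \<sigma> permutes {..<length I}}"
      then have s: "\<sigma> r < d" using permutes_in_image big(1) lI by fastforce
      have "fr w d N b (I ! r - 1) (\<sigma> r) = 0"
      proof -
        have "w ! \<sigma> r - 1 < I ! r - 1" using w_le_l[OF s] big(2) Iseq_nth_ge[OF wI s] by simp
        then show ?thesis using ub unfolding fr_def by simp
      qed
      then have "(\<Prod>r<length I. fr w d N b (I ! r - 1) (\<sigma> r)) = 0"
        using big(1) lI by (intro prod_zero) auto
      then show "of_int (sign \<sigma>) * (\<Prod>r<length I. fr w d N b (I ! r - 1) (\<sigma> r)) = 0" by simp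
    qed
  next
    case gap
    obtain r0 where r0: "r0 < p" "I ! r0 \<noteq> r0 + 1" "\<forall>r<r0. I ! r = r + 1"
    proof -
      define r0 where "r0 = (LEAST r. r < p \<and> I ! r \<noteq> r + 1)"
      have "r0 < p \<and> I ! r0 \<noteq> r0 + 1" unfolding r0_def by (rule LeastI[of _ r]) (use gap in auto)
      moreover have "\<forall>r<r0. I ! r = r + 1"
      proof (intro allI impI)
        fix r' assume "r' < r0"
        then have "\<not> (r' < p \<and> I ! r' \<noteq> r' + 1)" unfolding r0_def by (rule not_less_Least)
        then show "I ! r' = r' + 1" using \<open>r' < r0\<close> calculation by auto
      qed
      ultimately show ?thesis using that by blast
    qed
    have r0d: "r0 < d" using r0(1) p_lt by simp
    have Ir0: "r0 + 2 \<le> I ! r0" using Iseq_nth_ge[OF I r0d] r0(2) by simp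
    have Is: "s + 2 \<le> I ! s" if s: "r0 \<le> s" "s < d" for s
    proof -
      have "I ! r0 + (s - r0) \<le> I ! s" using Iseq_gap[OF I s] .
      then show ?thesis using Ir0 s by linarith
    qed
    show ?thesis unfolding pluecker_def
    proof (rule sum.neutral, intro ballI)
      fix \<sigma> assume "\<sigma> \<in> {\<sigma>. \<sigma> permutes {..<length I}}"
      then have sp: "\<sigma> permutes {..<d}" using lI by simp
      have "\<exists>s. r0 \<le> s \<and> s < d \<and> \<sigma> s \<le> r0"
      proof (rule ccontr)
        assume "\<not> ?thesis"
        then have sub: "\<sigma> ` {r0..<d} \<subseteq> {r0 + 1..<d}"
          using permutes_in_image[OF sp] by fastforce
        have "inj_on \<sigma> {r0..<d}" using permutes_inj[OF sp] by (simp add: inj_on_def inj_def)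
        then have "card {r0..<d} \<le> card {r0 + 1..<d}" using card_inj_on_le[OF _ sub] by simp
        then show False using r0d by simp
      qed
      then obtain s where s: "r0 \<le> s" "s < d" "\<sigma> s \<le> r0" by blast
      have ws: "w ! \<sigma> s = \<sigma> s + 1" using p_first s(3) r0(1) by simp
      have "\<sigma> s < I ! s - 1" using Is[OF s(1,2)] s by linarith
      then have "fr w d N b (I ! s - 1) (\<sigma> s) = 0"
        using ws ub unfolding fr_def by simp
      then have "(\<Prod>r<length I. fr w d N b (I ! r - 1) (\<sigma> r)) = 0"
        using s lI by (intro prod_zero) auto
      then show "of_int (sign \<sigma>) * (\<Prod>r<length I. fr w d N b (I ! r - 1) (\<sigma> r)) = 0" by simp
    qed
  qed
qed

lemma shift_mmult:
  assumes g: "\<forall>i j. p \<le> i \<longrightarrow> j < p \<longrightarrow> g i j = 0" and C: "low l C" and i: "i < N'"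
  shows "shift p (mmult N g C) i k = mmult N' (principal_sub p N' g) (shift p C) i k"
proof -
  have "shift p (mmult N g C) i k = (\<Sum>j<N. g (i + p) j * C j (k + p))"
    by (simp add: shift_def mmult_def)
  also have "\<dots> = (\<Sum>j\<in>{p..<N' + p}. g (i + p) j * C j (k + p))"
  proof (rule sum.mono_neutral_right)
    show "{p..<N' + p} \<subseteq> {..<N}" using pN' l_le by auto
    show "\<forall>j\<in>{..<N} - {p..<N' + p}. g (i + p) j * C j (k + p) = 0"
    proof
      fix j assume "j \<in> {..<N} - {p..<N' + p}"
      then have "j < p \<or> l \<le> j" using pN' by auto
      then show "g (i + p) j * C j (k + p) = 0" using g C unfolding low_def by auto
    qed
  qed simp
  also have "\<dots> = (\<Sum>j\<in>{0..<N'}. g (i + p) (j + p) * C (j + p) (k + p))"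
    using sum.shift_bounds_nat_ivl[of "\<lambda>j. g (i + p) j * C j (k + p)" 0 p N'] by simp
  also have "\<dots> = mmult N' (principal_sub p N' g) (shift p C) i k"
    unfolding mmult_def principal_sub_def shift_def using i by (simp add: atLeast0LessThan)
  finally show ?thesis .
qed

lemma LLZ_mmult:
  assumes g: "\<forall>i j. p \<le> i \<longrightarrow> j < p \<longrightarrow> g i j = 0" and C: "LLZ p C"
  shows "LLZ p (mmult N g C)"
  unfolding LLZ_def mmult_def
proof (intro allI impI)
  fix j k assume jk: "p \<le> j" "k < p"
  show "(\<Sum>m<N. g j m * C m k) = 0"
  proof (intro sum.neutral ballI)
    fix m show "g j m * C m k = 0"
    proof (cases "m < p")
      case True then show ?thesis using g jk by simp
    next
      case False then show ?thesis using C jk unfolding LLZ_def by simp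
    qed
  qed
qed

lemma lift_borel:
  assumes b': "b' \<in> borel N'"
  shows "\<exists>b\<in>borel N. principal_sub p N' b = b' \<and> dtop p b = 1"
proof -
  have bb: "supported N' N' b'" "\<forall>i j. j < i \<longrightarrow> b' i j = 0" "\<forall>i<N'. b' i i \<noteq> 0"
    using b' unfolding borel_iff by auto
  define b where "b = (\<lambda>i k. if p \<le> i \<and> i < l \<and> p \<le> k \<and> k < l then b' (i - p) (k - p) else idm N i k)"
  have "b \<in> borel N" unfolding borel_iff
  proof (intro conjI allI impI)
    show "supported N N b" unfolding supported_def b_def idm_def using l_le by auto
  next
    fix i j :: nat assume "j < i" then show "b i j = 0" using bb(2) unfolding b_def idm_def by auto
  next
    fix i assume "i < N" then show "b i i \<noteq> 0" using bb(3) pN' unfolding b_def idm_def by auto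
  qed
  moreover have "principal_sub p N' b = b'"
  proof (intro ext)
    fix i k show "principal_sub p N' b i k = b' i k"
      using bb(1) pN' unfolding principal_sub_def b_def supported_def by auto
  qed
  moreover have "dtop p b = 1"
  proof -
    have "dtop p b = dtop p (idm N)" unfolding dtop_def b_def by (intro arg_cong[of _ _ det] eq_matI) auto
    then show ?thesis using dtop_idm p_lt dN by simp
  qed
  ultimately show ?thesis by blast
qed

lemma psub_borel: "b \<in> borel N \<Longrightarrow> principal_sub p N' b \<in> borel N'"
  unfolding borel_iff principal_sub_def supported_def using pN' l_le by auto

lemma scale_borel: "b' \<in> borel N' \<Longrightarrow> t \<noteq> 0 \<Longrightarrow> (\<lambda>i k. t * b' i k) \<in> borel N'"
  unfolding borel_iff supported_def by auto

lemma fr_scale: "fr w' d' N' (\<lambda>i k. t * b' i k) = (\<lambda>i k. t * fr w' d' N' b' i k)"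
  unfolding fr_def by (auto simp: fun_eq_iff)

end


definition sw :: "nat \<Rightarrow> nat \<Rightarrow> cmat" where
  "sw a N = (\<lambda>i k. if i < N \<and> k < N \<and> k = Transposition.transpose a (Suc a) i then 1 else 0)"

definition EJ :: "nat list \<Rightarrow> cmat" where
  "EJ J = (\<lambda>i k. if k < length J \<and> i = J ! k - 1 then 1 else 0)"

lemma tr_lt: "Suc a < N \<Longrightarrow> i < N \<Longrightarrow> Transposition.transpose a (Suc a) i < N"
  by (simp add: Transposition.transpose_def)

lemma sw_mmult:
  assumes "Suc a < N" "i < N"
  shows "mmult N (sw a N) C i k = C (Transposition.transpose a (Suc a) i) k"
proof -
  let ?t = "Transposition.transpose a (Suc a) i"
  have "mmult N (sw a N) C i k = (\<Sum>j<N. if j = ?t then C j k else 0)"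
    unfolding mmult_def sw_def using assms by (intro sum.cong) auto
  also have "\<dots> = C ?t k" using tr_lt[OF assms] by (simp add: sum.delta)
  finally show ?thesis .
qed

lemma sw_inv:
  assumes "Suc a < N" shows "Defs.invertible_mat N (sw a N)"
proof (rule det_inv)
  show "supported N N (sw a N)" unfolding supported_def sw_def by auto
  let ?t = "Transposition.transpose a (Suc a)"
  have tp: "?t permutes {0..<N}" using assms by (intro permutes_swap_id) auto
  have "tom N (sw a N) = mat N N (\<lambda>(i, j). 1\<^sub>m N $$ (?t i, j))"
    by (rule eq_matI) (auto simp: tom_def sw_def tr_lt[OF assms])
  then have "det (tom N (sw a N)) = of_int (sign ?t)"
    using det_permute_rows[OF one_carrier_mat tp] by simp
  then show "det (tom N (sw a N)) \<noteq> 0" by (simp add: sign_def)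
qed

lemma block_mono: "i \<le> k \<Longrightarrow> block_of js i \<le> block_of js k"
  unfolding block_of_def by (induction js) auto

lemma sw_levi:
  assumes "Suc a < N" "block_of js a = block_of js (Suc a)"
  shows "sw a N \<in> levi N js"
  unfolding levi_def
proof (intro CollectI conjI allI impI)
  show "Defs.invertible_mat N (sw a N)" by (rule sw_inv[OF assms(1)])
next
  fix i k assume "i < N" "k < N" "block_of js i \<noteq> block_of js k"
  then show "sw a N i k = 0" using assms(2) unfolding sw_def Transposition.transpose_def by auto
qed

lemma pluecker_EJ:
  assumes J: "J \<in> Iseq d N" shows "pluecker J (EJ J) = 1"
proof -
  have lJ: "length J = d" using J by (simp add: Iseq_def)
  have inj: "\<And>r s. r < d \<Longrightarrow> s < d \<Longrightarrow> J ! r - 1 = J ! s - 1 \<Longrightarrow> r = s"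
  proof -
    fix r s assume rs: "r < d" "s < d" "J ! r - 1 = J ! s - 1"
    then have "J ! r = J ! s" using Iseq_nth_ge[OF J, of r] Iseq_nth_ge[OF J, of s] by simp
    then show "r = s" using Iseq_lt[OF J, of r s] Iseq_lt[OF J, of s r] rs by (cases "r < s"; cases "s < r") auto
  qed
  let ?S = "{\<sigma>. \<sigma> permutes {..<length J}}"
  let ?f = "\<lambda>\<sigma>. of_int (sign \<sigma>) * (\<Prod>r<length J. EJ J (J ! r - 1) (\<sigma> r))"
  have "(\<Sum>\<sigma>\<in>?S. ?f \<sigma>) = ?f id + (\<Sum>\<sigma>\<in>?S - {id}. ?f \<sigma>)"
    by (rule sum.remove) (auto simp: permutes_id finite_permutations)
  also have "(\<Sum>\<sigma>\<in>?S - {id}. ?f \<sigma>) = 0"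
  proof (rule sum.neutral, intro ballI)
    fix \<sigma> assume "\<sigma> \<in> ?S - {id}"
    then have sp: "\<sigma> permutes {..<d}" and ne: "\<sigma> \<noteq> id" using lJ by auto
    have "\<exists>r. \<sigma> r \<noteq> r" using ne by (auto simp: fun_eq_iff)
    then obtain r where r: "\<sigma> r \<noteq> r" by blast
    have "r \<in> {..<d}" using permutes_not_in[OF sp, of r] r by blast
    then have rd: "r < d" by simp
    have sd: "\<sigma> r < d" using permutes_in_image[OF sp] rd by simp
    have "EJ J (J ! r - 1) (\<sigma> r) = 0" using inj[OF rd sd] r unfolding EJ_def by auto
    then have "(\<Prod>r<length J. EJ J (J ! r - 1) (\<sigma> r)) = 0" using rd lJ by (intro prod_zero) auto
    then show "?f \<sigma> = 0" by simp
  qed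
  also have "?f id = 1" by (simp add: EJ_def)
  finally show ?thesis unfolding pluecker_def by simp
qed

context wsetup
begin

lemma idm_borel: "idm N \<in> borel N"
  unfolding borel_iff supported_def idm_def by auto

lemma boundary:
  fixes js
  assumes st: "ls_stable w d N (levi N js)" and a1: "a + 1 \<in> set w" and a2: "a + 2 \<notin> set w" and aN: "Suc a < N"
    and nl: "\<not> (\<exists>J\<in>Iseq d' N'. map (\<lambda>x. if x = a + 1 then a + 2 else x) w = liftI p J)"
  shows "block_of js a \<noteq> block_of js (Suc a)"
proof
  assume bl: "block_of js a = block_of js (Suc a)"
  define J where "J = map (\<lambda>x. if x = a + 1 then a + 2 else x) w"
  have lJ: "length J = d" using len by (simp add: J_def)
  have Jn: "k < d \<Longrightarrow> J ! k = (if w ! k = a + 1 then a + 2 else w ! k)" for k using len by (simp add: J_def)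
  have JI: "J \<in> Iseq d N"
  proof -
    have "sorted_wrt (<) J"
      unfolding sorted_wrt_iff_nth_less
    proof (intro allI impI)
      fix i j assume ij: "i < j" "j < length J"
      have wij: "w ! i < w ! j" using Iseq_lt[OF wI, of i j] ij lJ by simp
      have "w ! j \<in> set w" using ij lJ len by simp
      then have "w ! j \<noteq> a + 2" using a2 by auto
      then show "J ! i < J ! j" using Jn[of i] Jn[of j] ij lJ wij by auto
    qed
    moreover have "\<forall>x\<in>set J. 1 \<le> x \<and> x \<le> N"
    proof
      fix x assume "x \<in> set J"
      then obtain y where "y \<in> set w" "x = (if y = a + 1 then a + 2 else y)" unfolding J_def by auto
      then show "1 \<le> x \<and> x \<le> N" using wI aN unfolding Iseq_def by auto
    qed
    ultimately show ?thesis by (simp add: Iseq_def lJ)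
  qed
  define B0 where "B0 = fr w d N (idm N)"
  have B0o: "B0 \<in> orbit_frames w d N" unfolding orbit_fr B0_def using idm_borel by blast
  have swL: "sw a N \<in> levi N js" by (rule sw_levi[OF aN bl])
  have inS: "mmult N (sw a N) B0 \<in> schubert_frames w d N"
    using st swL B0o orbit_sub unfolding ls_stable_def by blast
  have pf: "poly_fun d N (pluecker J)" using pf_poly[OF pf_pluecker[OF JI]] .
  have van: "\<forall>B\<in>orbit_frames w d N. pluecker J B = 0"
  proof
    fix B assume "B \<in> orbit_frames w d N"
    then obtain b where b: "b \<in> borel N" "B = fr w d N b" unfolding orbit_fr by blast
    show "pluecker J B = 0" using vanish[OF borel_upper[OF b(1)] JI] nl b(2) unfolding J_def by blast
  qed
  have zero: "pluecker J (mmult N (sw a N) B0) = 0"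
    using inS pf van unfolding schubert_frames_def by blast
  have agree: "\<forall>i<N. \<forall>k<d. mmult N (sw a N) B0 i k = EJ J i k"
  proof (intro allI impI)
    fix i k assume i: "i < N" and k: "k < d"
    let ?t = "Transposition.transpose a (Suc a) i"
    have wk: "1 \<le> w ! k" "w ! k \<le> N" using Iseq_nth_ge[OF wI k] Iseq_nth_le[OF wI k] by auto
    have "mmult N (sw a N) B0 i k = B0 ?t k" using sw_mmult[OF aN i] .
    also have "\<dots> = (if ?t = w ! k - 1 then 1 else 0)"
      using tr_lt[OF aN i] k wk unfolding B0_def fr_def idm_def by auto
    also have "\<dots> = EJ J i k"
    proof -
      have "w ! k \<in> set w" using k len by simp
      then have wk2: "w ! k \<noteq> a + 2" using a2 by auto
      have "(?t = w ! k - 1) \<longleftrightarrow> (i = J ! k - 1)"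
        using Jn[OF k] wk wk2 unfolding Transposition.transpose_def by auto
      then show ?thesis unfolding EJ_def using k lJ by simp
    qed
    finally show "mmult N (sw a N) B0 i k = EJ J i k" .
  qed
  have "pluecker J (mmult N (sw a N) B0) = pluecker J (EJ J)" by (rule pluecker_agree[OF JI agree])
  then show False using zero pluecker_EJ[OF JI] by simp
qed

lemma bnd_p:
  assumes st: "ls_stable w d N (levi N js)" and p0: "0 < p"
  shows "block_of js (p - 1) \<noteq> block_of js p"
proof -
  have "w ! (p - 1) \<in> set w" using p_lt len by simp
  moreover have "w ! (p - 1) = (p - 1) + 1" using p_first[of "p - 1"] p0 by simp
  ultimately have a1: "(p - 1) + 1 \<in> set w" by simp
  have a2: "(p - 1) + 2 \<notin> set w"
  proof
    assume "(p - 1) + 2 \<in> set w"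
    then obtain k where k: "k < d" "w ! k = p + 1" using p0 len by (auto simp: in_set_conv_nth)
    show False
    proof (cases "k < p")
      case True then show False using p_first[OF True] k by simp
    next
      case False then show False using w_gt_p[of k] k by simp
    qed
  qed
  have aN: "Suc (p - 1) < N" using p0 p_lt dN by simp
  have nl: "\<not> (\<exists>J\<in>Iseq d' N'. map (\<lambda>x. if x = (p - 1) + 1 then (p - 1) + 2 else x) w = liftI p J)"
  proof
    assume "\<exists>J\<in>Iseq d' N'. map (\<lambda>x. if x = (p - 1) + 1 then (p - 1) + 2 else x) w = liftI p J"
    then obtain J where "map (\<lambda>x. if x = (p - 1) + 1 then (p - 1) + 2 else x) w = liftI p J" by blast
    then have "map (\<lambda>x. if x = (p - 1) + 1 then (p - 1) + 2 else x) w ! (p - 1) = liftI p J ! (p - 1)" by simp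
    then show False using p0 p_first[of "p - 1"] p_lt len liftI_nth1[of "p - 1" p J] by simp
  qed
  show ?thesis using boundary[OF st a1 a2 aN nl] p0 by simp
qed

lemma bnd_l:
  assumes st: "ls_stable w d N (levi N js)" and lN: "l < N"
  shows "block_of js (l - 1) \<noteq> block_of js l"
proof -
  have l1: "1 \<le> l" using l_ge by simp
  have "w ! (d - 1) \<in> set w" using len d1 by simp
  then have a1: "(l - 1) + 1 \<in> set w" using l_eq l1 by simp
  have a2: "(l - 1) + 2 \<notin> set w"
  proof
    assume "(l - 1) + 2 \<in> set w"
    then obtain k where k: "k < d" "w ! k = l + 1" using l1 len by (auto simp: in_set_conv_nth)
    then show False using w_le_l[of k] by simp
  qed
  have aN: "Suc (l - 1) < N" using l1 lN by simp
  have nl: "\<not> (\<exists>J\<in>Iseq d' N'. map (\<lambda>x. if x = (l - 1) + 1 then (l - 1) + 2 else x) w = liftI p J)"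
  proof
    assume "\<exists>J\<in>Iseq d' N'. map (\<lambda>x. if x = (l - 1) + 1 then (l - 1) + 2 else x) w = liftI p J"
    then obtain J where J: "J \<in> Iseq d' N'" "map (\<lambda>x. if x = (l - 1) + 1 then (l - 1) + 2 else x) w = liftI p J" by blast
    have "map (\<lambda>x. if x = (l - 1) + 1 then (l - 1) + 2 else x) w ! (d - 1) = l + 1"
      using l_eq len d1 l1 by simp
    moreover have "liftI p J ! (d - 1) \<le> l" using liftI_le_l[OF J(1)] d1 by simp
    ultimately show False using J(2) by simp
  qed
  show ?thesis using boundary[OF st a1 a2 aN nl] l1 by simp
qed

lemma levi_split:
  assumes st: "ls_stable w d N (levi N js)" and g: "g \<in> levi N js" and s: "s = p \<or> s = l"
  shows "\<forall>i k. i < s \<longrightarrow> s \<le> k \<longrightarrow> g i k = 0 \<and> g k i = 0"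
proof (intro allI impI)
  fix i k assume ik: "i < s" "s \<le> k"
  have sup: "supported N N g" using g unfolding levi_def Defs.invertible_mat_def by auto
  show "g i k = 0 \<and> g k i = 0"
  proof (cases "k < N")
    case False then show ?thesis using sup unfolding supported_def by auto
  next
    case True
    have s0: "0 < s" using ik by simp
    have bs: "block_of js (s - 1) \<noteq> block_of js s"
      using s bnd_p[OF st] bnd_l[OF st] s0 True ik by auto
    have "block_of js i \<le> block_of js (s - 1)" using ik by (intro block_mono) simp
    moreover have "block_of js (s - 1) \<le> block_of js s" by (intro block_mono) simp
    moreover have "block_of js s \<le> block_of js k" using ik by (intro block_mono) simp
    ultimately have "block_of js i \<noteq> block_of js k" using bs by simp
    moreover have "i < N" using ik True by simp
    ultimately show ?thesis using g True unfolding levi_def by auto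
  qed
qed

lemma chi_nz:
  assumes st: "ls_stable w d N (levi N js)" and g: "g \<in> levi N js"
  shows "dtop p g \<noteq> 0"
proof -
  obtain h where h: "mmult N h g = idm N" using g unfolding levi_def Defs.invertible_mat_def by blast
  have "LLZ p g" unfolding LLZ_def using levi_split[OF st g, of p] by auto
  then have "dtop p (mmult N h g) = dtop p h * dtop p g" using dtop_mult p_lt dN by simp
  then have "dtop p h * dtop p g = 1" using h dtop_idm p_lt dN by simp
  then show ?thesis by auto
qed

lemma sc_levi: "t \<noteq> 0 \<Longrightarrow> sc N t \<in> levi N js"
  unfolding levi_def
proof (intro CollectI conjI allI impI)
  assume t: "t \<noteq> 0"
  show "Defs.invertible_mat N (sc N t)"
  proof (rule det_inv)
    show "supported N N (sc N t)" unfolding supported_def sc_def by auto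
    have "det (tom N (sc N t)) = (\<Prod>i<N. sc N t i i)" by (rule det_upper) (simp add: sc_def)
    then show "det (tom N (sc N t)) \<noteq> 0" using t by (simp add: sc_def)
  qed
next
  fix i k assume "block_of js i \<noteq> block_of js k" then show "sc N t i k = 0" by (auto simp: sc_def)
qed

lemma psub_sc: "principal_sub p N' (sc N t) = sc N' t"
  unfolding principal_sub_def sc_def using pN' l_le by (auto simp: fun_eq_iff)

end


lemma coeffs_zero:
  assumes e: "0 < (e::nat)" and H: "\<And>t::complex. t \<noteq> 0 \<Longrightarrow> (\<Sum>n<M. c n * t ^ (e * n)) = 0"
  shows "n < M \<Longrightarrow> c n = 0"
proof -
  assume nM: "n < M"
  define P where "P = (\<Sum>n<M. monom (c n) (e * n))"
  have ev: "poly P t = (\<Sum>n<M. c n * t ^ (e * n))" for t unfolding P_def by (simp add: poly_sum poly_monom)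
  have "P = 0"
  proof (rule ccontr)
    assume "P \<noteq> 0"
    then have "finite {t. poly P t = 0}" by (rule poly_roots_finite)
    moreover have "UNIV - {0} \<subseteq> {t. poly P t = 0}" using H ev by auto
    ultimately have "finite (UNIV - {0::complex})" by (rule finite_subset[rotated])
    then show False by (simp add: infinite_UNIV_char_0)
  qed
  then have "0 = coeff P (e * n)" by simp
  also have "\<dots> = (\<Sum>m<M. if e * m = e * n then c m else 0)" unfolding P_def coeff_sum by simp
  also have "\<dots> = (\<Sum>m<M. if m = n then c m else 0)" using e by (intro sum.cong) auto
  also have "\<dots> = c n" using nM by (simp add: sum.delta)
  finally show ?thesis by simp
qed

lemma poly_fun_zero: "poly_fun d N (\<lambda>A. 0)"
  unfolding poly_fun_ev by (rule exI[of _ "[]"]) (auto simp: fun_eq_iff)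

lemma poly_fun_add: "poly_fun d N F \<Longrightarrow> poly_fun d N G \<Longrightarrow> poly_fun d N (\<lambda>A. F A + G A)"
  unfolding poly_fun_ev by (elim exE conjE, rule_tac x="xs @ xsa" in exI) auto

lemma poly_fun_sum: "finite D \<Longrightarrow> (\<forall>x\<in>D. poly_fun d N (Fs x)) \<Longrightarrow> poly_fun d N (\<lambda>A. \<Sum>x\<in>D. Fs x A)"
proof (induction D rule: finite_induct)
  case empty then show ?case by (simp add: poly_fun_zero)
next
  case (insert x F) then show ?case using poly_fun_add[of d N "Fs x"] by simp
qed

lemma poly_fun_comp: "poly_fun d N F \<Longrightarrow> poly_fun d N (\<lambda>A. F (mmult N g A))"
proof -
  assume "poly_fun d N F"
  then obtain M Fs where M: "\<forall>n. pf d N n (Fs n)" "F = (\<lambda>A. \<Sum>n<M. Fs n A)" using poly_decomp by blast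
  have "poly_fun d N (\<lambda>A. \<Sum>n\<in>{..<M}. Fs n (mmult N g A))"
  proof (rule poly_fun_sum)
    show "\<forall>n\<in>{..<M}. poly_fun d N (\<lambda>A. Fs n (mmult N g A))"
      using M(1) pf_comp pf_poly by blast
  qed simp
  then show ?thesis using M(2) by simp
qed

lemma mmult_supp2: "supported n n g \<Longrightarrow> supported n m A \<Longrightarrow> supported n m (mmult n g A)"
  unfolding supported_def mmult_def by auto

lemma psub_supp: "supported n n (principal_sub p n g)"
  unfolding supported_def principal_sub_def by auto

context wsetup
begin

lemma agree_mm:
  assumes "\<forall>i<N'. \<forall>k<d'. C i k = D i k"
  shows "\<forall>i<N'. \<forall>k<d'. mmult N' g C i k = mmult N' g D i k"
  using assms unfolding mmult_def by auto

lemma shiftB_agree: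
  assumes b: "b \<in> borel N"
  shows "\<forall>i<N'. \<forall>k<d'. shift p (fr w d N b) i k = fr w' d' N' (principal_sub p N' b) i k"
  using fr_shift by blast

lemma gB_agree:
  assumes st: "ls_stable w d N (levi N js)" and g: "g \<in> levi N js" and b: "b \<in> borel N"
  shows "\<forall>i<N'. \<forall>k<d'. shift p (mmult N g (fr w d N b)) i k =
           mmult N' (principal_sub p N' g) (fr w' d' N' (principal_sub p N' b)) i k"
proof (intro allI impI)
  fix i k assume i: "i < N'" and k: "k < d'"
  have gz: "\<forall>i j. p \<le> i \<longrightarrow> j < p \<longrightarrow> g i j = 0" using levi_split[OF st g, of p] by auto
  have "shift p (mmult N g (fr w d N b)) i k = mmult N' (principal_sub p N' g) (shift p (fr w d N b)) i k"
    by (rule shift_mmult[OF gz fr_low[OF borel_upper[OF b]] i])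
  also have "\<dots> = mmult N' (principal_sub p N' g) (fr w' d' N' (principal_sub p N' b)) i k"
    using agree_mm[OF shiftB_agree[OF b]] i k by blast
  finally show "shift p (mmult N g (fr w d N b)) i k = mmult N' (principal_sub p N' g) (fr w' d' N' (principal_sub p N' b)) i k" .
qed

lemma gB_LLZ:
  assumes st: "ls_stable w d N (levi N js)" and g: "g \<in> levi N js" and b: "b \<in> borel N"
  shows "LLZ p (mmult N g (fr w d N b))"
proof -
  have gz: "\<forall>i j. p \<le> i \<longrightarrow> j < p \<longrightarrow> g i j = 0" using levi_split[OF st g, of p] by auto
  show ?thesis by (rule LLZ_mmult[OF gz fr_LLZ[OF borel_upper[OF b]]])
qed

lemma gB_dtop:
  assumes b: "b \<in> borel N"
  shows "dtop p (mmult N g (fr w d N b)) = dtop p g * dtop p b"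
  using dtop_mult[OF fr_LLZ[OF borel_upper[OF b]]] p_lt dN fr_dtop by simp

lemma homp_lift: "homp d' N' n xs \<Longrightarrow> homp d N n (liftxs p xs)"
  using homp_liftxs liftI_Iseq' by blast

lemma ev_lift_orbit:
  assumes b: "b \<in> borel N" and xs: "homp d' N' n xs"
  shows "ev (liftxs p xs) (fr w d N b) = dtop p b ^ n * ev xs (fr w' d' N' (principal_sub p N' b))"
proof -
  have "ev (liftxs p xs) (fr w d N b) = dtop p (fr w d N b) ^ n * ev xs (shift p (fr w d N b))"
    by (rule ev_lift[OF fr_LLZ[OF borel_upper[OF b]] xs])
  also have "ev xs (shift p (fr w d N b)) = ev xs (fr w' d' N' (principal_sub p N' b))"
    by (rule ev_agree[OF xs shiftB_agree[OF b]])
  finally show ?thesis using fr_dtop by simp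
qed

lemma ev_lift_gorbit:
  assumes st: "ls_stable w d N (levi N js)" and g: "g \<in> levi N js" and b: "b \<in> borel N" and xs: "homp d' N' n xs"
  shows "ev (liftxs p xs) (mmult N g (fr w d N b)) =
      (dtop p g * dtop p b) ^ n * ev xs (mmult N' (principal_sub p N' g) (fr w' d' N' (principal_sub p N' b)))"
proof -
  have "ev (liftxs p xs) (mmult N g (fr w d N b)) = dtop p (mmult N g (fr w d N b)) ^ n * ev xs (shift p (mmult N g (fr w d N b)))"
    by (rule ev_lift[OF gB_LLZ[OF st g b] xs])
  also have "ev xs (shift p (mmult N g (fr w d N b))) = ev xs (mmult N' (principal_sub p N' g) (fr w' d' N' (principal_sub p N' b)))"
    by (rule ev_agree[OF xs gB_agree[OF st g b]])
  finally show ?thesis using gB_dtop[OF b] by simp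
qed

lemma red_stable:
  assumes st: "ls_stable w d N (levi N js)"
  shows "ls_stable w' d' N' (red_L w (levi N js))"
  unfolding ls_stable_def
proof (intro ballI)
  fix g' A' assume g': "g' \<in> red_L w (levi N js)" and A': "A' \<in> schubert_frames w' d' N'"
  obtain g where g: "g \<in> levi N js" "g' = principal_sub p N' g" using g' unfolding red_L_def by blast
  have supA: "supported N' d' A'" using schubert_supported[OF A'] .
  show "mmult N' g' A' \<in> schubert_frames w' d' N'"
    unfolding schubert_frames_def
  proof (intro CollectI conjI allI impI)
    show "supported N' d' (mmult N' g' A')" using mmult_supp2[OF _ supA] psub_supp g(2) by blast
  next
    fix F' assume F': "poly_fun d' N' F' \<and> (\<forall>B\<in>orbit_frames w' d' N'. F' B = 0)"
    obtain M Fs where M: "\<forall>n. pf d' N' n (Fs n)" "F' = (\<lambda>A. \<Sum>n<M. Fs n A)" using poly_decomp F' by blast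
    obtain xs where xs: "homp d' N' n (xs n)" "Fs n = ev (xs n)" for n
    proof -
      have "\<forall>n. \<exists>xs. homp d' N' n xs \<and> Fs n = ev xs" using M(1) unfolding pf_def by blast
      then obtain xs where "\<forall>n. homp d' N' n (xs n) \<and> Fs n = ev (xs n)" by metis
      then show ?thesis using that by blast
    qed
    have van1: "Fs n B' = 0" if nM: "n < M" and B'o: "B' \<in> orbit_frames w' d' N'" for n B'
    proof -
      obtain b' where b': "b' \<in> borel N'" "B' = fr w' d' N' b'" using B'o unfolding orbit_fr by blast
      have "\<And>t::complex. t \<noteq> 0 \<Longrightarrow> (\<Sum>n<M. Fs n B' * t ^ (d' * n)) = 0"
      proof -
        fix t :: complex assume t: "t \<noteq> 0"
        have "fr w' d' N' (\<lambda>i k. t * b' i k) \<in> orbit_frames w' d' N'"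
          unfolding orbit_fr using scale_borel[OF b'(1) t] by blast
        then have "F' (fr w' d' N' (\<lambda>i k. t * b' i k)) = 0" using F' by blast
        moreover have "Fs n (fr w' d' N' (\<lambda>i k. t * b' i k)) = Fs n B' * t ^ (d' * n)" for n
          using ev_scale[OF xs(1)] unfolding xs(2) fr_scale b'(2) by (simp add: mult.commute)
        ultimately show "(\<Sum>n<M. Fs n B' * t ^ (d' * n)) = 0" using M(2) by simp
      qed
      then show "Fs n B' = 0" using coeffs_zero[OF d'_pos, where M=M and c="\<lambda>n. Fs n B'"] nM by blast
    qed
    have van2: "Fs n (mmult N' g' B') = 0" if nM: "n < M" and B'o: "B' \<in> orbit_frames w' d' N'" for n B'
    proof -
      obtain b' where b': "b' \<in> borel N'" "B' = fr w' d' N' b'" using B'o unfolding orbit_fr by blast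
      obtain b where b: "b \<in> borel N" "principal_sub p N' b = b'" "dtop p b = 1" using lift_borel[OF b'(1)] by blast
      have pfl: "poly_fun d N (ev (liftxs p (xs n)))" using pf_poly homp_lift[OF xs(1)] unfolding pf_def by blast
      have vo: "\<forall>B\<in>orbit_frames w d N. ev (liftxs p (xs n)) B = 0"
      proof
        fix B assume "B \<in> orbit_frames w d N"
        then obtain bb where bb: "bb \<in> borel N" "B = fr w d N bb" unfolding orbit_fr by blast
        have "fr w' d' N' (principal_sub p N' bb) \<in> orbit_frames w' d' N'"
          unfolding orbit_fr using psub_borel[OF bb(1)] by blast
        then have "Fs n (fr w' d' N' (principal_sub p N' bb)) = 0" using van1[OF nM] by blast
        then show "ev (liftxs p (xs n)) B = 0" using ev_lift_orbit[OF bb(1) xs(1)] bb(2) xs(2) by simp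
      qed
      have "fr w d N b \<in> schubert_frames w d N" using orbit_sub b(1) unfolding orbit_fr by blast
      then have "mmult N g (fr w d N b) \<in> schubert_frames w d N" using st g(1) unfolding ls_stable_def by blast
      then have "ev (liftxs p (xs n)) (mmult N g (fr w d N b)) = 0" using pfl vo unfolding schubert_frames_def by blast
      then have "(dtop p g * dtop p b) ^ n * ev (xs n) (mmult N' g' B') = 0"
        using ev_lift_gorbit[OF st g(1) b(1) xs(1)] b(2) b'(2) g(2) by simp
      moreover have "dtop p g \<noteq> 0" by (rule chi_nz[OF st g(1)])
      ultimately show ?thesis using b(3) xs(2) by simp
    qed
    have "poly_fun d' N' (\<lambda>A. F' (mmult N' g' A))" using poly_fun_comp F' by blast
    moreover have "\<forall>B'\<in>orbit_frames w' d' N'. F' (mmult N' g' B') = 0" using van2 M(2) by simp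
    ultimately show "F' (mmult N' g' A') = 0" using A' unfolding schubert_frames_def by blast
  qed
qed

end


lemma pf_ev: "homp d N n xs \<Longrightarrow> poly_fun d N (ev xs)"
  using pf_poly unfolding pf_def by blast

locale lsetup = wsetup +
  fixes js :: "nat list"
  assumes st: "ls_stable w d N (levi N js)"
begin

abbreviation "L \<equiv> levi N js"
abbreviation "L' \<equiv> red_L w (levi N js)"

lemma st': "ls_stable w' d' N' L'" by (rule red_stable[OF st])

definition Rel :: "nat \<Rightarrow> (cmat \<Rightarrow> complex) \<Rightarrow> (cmat \<Rightarrow> complex) \<Rightarrow> bool" where
  "Rel n f' f \<longleftrightarrow> (\<exists>xs. homp d' N' n xs \<and> f' = rs w' d' N' (ev xs) \<and> f = rs w d N (ev (liftxs p xs)))"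

definition T :: "nat \<Rightarrow> (cmat \<Rightarrow> complex) \<Rightarrow> (cmat \<Rightarrow> complex)" where
  "T n f' = (SOME f. Rel n f' f)"

lemma Rel_fun:
  assumes "Rel n f' f1" "Rel n f' f2" shows "f1 = f2"
proof -
  obtain xs1 where x1: "homp d' N' n xs1" "f' = rs w' d' N' (ev xs1)" "f1 = rs w d N (ev (liftxs p xs1))"
    using assms(1) unfolding Rel_def by blast
  obtain xs2 where x2: "homp d' N' n xs2" "f' = rs w' d' N' (ev xs2)" "f2 = rs w d N (ev (liftxs p xs2))"
    using assms(2) unfolding Rel_def by blast
  have "rs w d N (ev (liftxs p xs1)) = rs w d N (ev (liftxs p xs2))"
  proof (rule rs_eqI[OF pf_ev[OF homp_lift[OF x1(1)]] pf_ev[OF homp_lift[OF x2(1)]]])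
    fix B assume "B \<in> orbit_frames w d N"
    then obtain b where b: "b \<in> borel N" "B = fr w d N b" unfolding orbit_fr by blast
    have o: "fr w' d' N' (principal_sub p N' b) \<in> orbit_frames w' d' N'"
      unfolding orbit_fr using psub_borel[OF b(1)] by blast
    have "ev xs1 (fr w' d' N' (principal_sub p N' b)) = ev xs2 (fr w' d' N' (principal_sub p N' b))"
      using rs_eq_orbit[OF _ o] x1(2) x2(2) by metis
    then show "ev (liftxs p xs1) B = ev (liftxs p xs2) B"
      using ev_lift_orbit[OF b(1) x1(1)] ev_lift_orbit[OF b(1) x2(1)] b(2) by simp
  qed
  then show ?thesis using x1 x2 by simp
qed

lemma Rel_inj:
  assumes "Rel n f1' f" "Rel n f2' f" shows "f1' = f2'"
proof -
  obtain xs1 where x1: "homp d' N' n xs1" "f1' = rs w' d' N' (ev xs1)" "f = rs w d N (ev (liftxs p xs1))"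
    using assms(1) unfolding Rel_def by blast
  obtain xs2 where x2: "homp d' N' n xs2" "f2' = rs w' d' N' (ev xs2)" "f = rs w d N (ev (liftxs p xs2))"
    using assms(2) unfolding Rel_def by blast
  have "rs w' d' N' (ev xs1) = rs w' d' N' (ev xs2)"
  proof (rule rs_eqI[OF pf_ev[OF x1(1)] pf_ev[OF x2(1)]])
    fix B' assume "B' \<in> orbit_frames w' d' N'"
    then obtain b' where b': "b' \<in> borel N'" "B' = fr w' d' N' b'" unfolding orbit_fr by blast
    obtain b where b: "b \<in> borel N" "principal_sub p N' b = b'" "dtop p b = 1" using lift_borel[OF b'(1)] by blast
    have o: "fr w d N b \<in> orbit_frames w d N" unfolding orbit_fr using b(1) by blast
    have "ev (liftxs p xs1) (fr w d N b) = ev (liftxs p xs2) (fr w d N b)"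
      using rs_eq_orbit[OF _ o] x1(3) x2(3) by metis
    then show "ev xs1 B' = ev xs2 B'"
      using ev_lift_orbit[OF b(1) x1(1)] ev_lift_orbit[OF b(1) x2(1)] b b'(2) by simp
  qed
  then show ?thesis using x1 x2 by simp
qed

lemma Rel_V: "Rel n f' f \<Longrightarrow> f' \<in> Vn w' d' N' n \<and> f \<in> Vn w d N n"
  unfolding Rel_def Vn_def pf_def using homp_lift by blast

lemma Rel_ex: "f' \<in> Vn w' d' N' n \<Longrightarrow> \<exists>f. Rel n f' f"
  unfolding Rel_def Vn_def pf_def by blast

lemma T_rel: "f' \<in> Vn w' d' N' n \<Longrightarrow> Rel n f' (T n f')"
  unfolding T_def using Rel_ex by (metis someI_ex)

lemma T_eq: "Rel n f' f \<Longrightarrow> T n f' = f"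
  using T_rel Rel_fun Rel_V by blast

definition isl :: "nat list \<Rightarrow> bool" where "isl I \<longleftrightarrow> (\<exists>J\<in>Iseq d' N'. I = liftI p J)"
definition unl :: "nat list \<Rightarrow> nat list" where "unl I = (SOME J. J \<in> Iseq d' N' \<and> I = liftI p J)"

lemma unl: "isl I \<Longrightarrow> unl I \<in> Iseq d' N' \<and> I = liftI p (unl I)"
  unfolding isl_def unl_def by (rule someI_ex) blast

lemma unl_eq: "isl I \<Longrightarrow> liftI p (unl I) = I"
  using unl by metis

lemma Rel_surj:
  assumes f: "f \<in> Vn w d N n" shows "\<exists>f'. Rel n f' f"
proof -
  obtain ys where ys: "homp d N n ys" "f = rs w d N (ev ys)" using f unfolding Vn_def pf_def by blast
  define K where "K = (\<lambda>(c::complex, Is). \<forall>I\<in>set Is. isl I)"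
  define xs where "xs = map (\<lambda>(c, Is). (c, map unl Is)) (filter K ys)"
  have hx: "homp d' N' n xs" using ys(1) unl unfolding xs_def homp_def K_def by fastforce
  have lx: "liftxs p xs = filter K ys"
    unfolding xs_def liftxs_def
    by (induction ys) (auto simp: K_def comp_def map_idI unl_eq)
  have "rs w d N (ev ys) = rs w d N (ev (liftxs p xs))"
  proof (rule rs_eqI[OF pf_ev[OF ys(1)] pf_ev[OF homp_lift[OF hx]]])
    fix B assume "B \<in> orbit_frames w d N"
    then obtain b where b: "b \<in> borel N" "B = fr w d N b" unfolding orbit_fr by blast
    have "ev ys B = ev (filter K ys) B" using ys(1)
    proof (induction ys)
      case Nil then show ?case by simp
    next
      case (Cons y ys)
      obtain c Is where y: "y = (c, Is)" by fastforce
      have h: "\<forall>I\<in>set Is. I \<in> Iseq d N" "homp d N n ys" using Cons.prems y unfolding homp_def by auto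
      show ?case
      proof (cases "K y")
        case True then show ?thesis using Cons.IH[OF h(2)] y by simp
      next
        case False
        then obtain I where I: "I \<in> set Is" "\<not> isl I" using y unfolding K_def by auto
        have "pluecker I B = 0" using vanish[OF borel_upper[OF b(1)]] h(1) I b(2) unfolding isl_def by blast
        then have "(\<Prod>I\<leftarrow>Is. pluecker I B) = 0" using I(1) by (simp add: prod_list_zero_iff)
        then show ?thesis using Cons.IH[OF h(2)] y False by simp
      qed
    qed
    then show "ev ys B = ev (liftxs p xs) B" using lx by simp
  qed
  then show ?thesis unfolding Rel_def using hx ys(2) by blast
qed

lemma T_bij: "bij_betw (T n) (Vn w' d' N' n) (Vn w d N n)"
  unfolding bij_betw_def
proof (intro conjI)
  show "inj_on (T n) (Vn w' d' N' n)"
    by (rule inj_onI) (metis T_rel Rel_inj)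
  show "T n ` Vn w' d' N' n = Vn w d N n"
  proof
    show "T n ` Vn w' d' N' n \<subseteq> Vn w d N n" using T_rel Rel_V by blast
    show "Vn w d N n \<subseteq> T n ` Vn w' d' N' n"
    proof
      fix f assume "f \<in> Vn w d N n"
      then obtain f' where "Rel n f' f" using Rel_surj by blast
      then show "f \<in> T n ` Vn w' d' N' n" using T_eq Rel_V by (metis image_eqI)
    qed
  qed
qed

lemma Rel_add: "Rel n f' f \<Longrightarrow> Rel n h' h \<Longrightarrow> Rel n (\<lambda>A. f' A + h' A) (\<lambda>A. f A + h A)"
  unfolding Rel_def
proof (elim exE conjE)
  fix xs ys assume "homp d' N' n xs" "f' = rs w' d' N' (ev xs)" "f = rs w d N (ev (liftxs p xs))"
    "homp d' N' n ys" "h' = rs w' d' N' (ev ys)" "h = rs w d N (ev (liftxs p ys))"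
  then show "\<exists>xs. homp d' N' n xs \<and> (\<lambda>A. f' A + h' A) = rs w' d' N' (ev xs) \<and> (\<lambda>A. f A + h A) = rs w d N (ev (liftxs p xs))"
    by (intro exI[of _ "xs @ ys"]) (auto simp: homp_def rs_def liftxs_def fun_eq_iff)
qed

lemma liftxs_smult: "liftxs p (map (\<lambda>(c, Is). (k * c, Is)) xs) = map (\<lambda>(c, Is). (k * c, Is)) (liftxs p xs)"
  unfolding liftxs_def by (induction xs) auto

lemma Rel_smult: "Rel n f' f \<Longrightarrow> Rel n (\<lambda>A. k * f' A) (\<lambda>A. k * f A)"
  unfolding Rel_def
proof (elim exE conjE)
  fix xs assume "homp d' N' n xs" "f' = rs w' d' N' (ev xs)" "f = rs w d N (ev (liftxs p xs))"
  then show "\<exists>xs. homp d' N' n xs \<and> (\<lambda>A. k * f' A) = rs w' d' N' (ev xs) \<and> (\<lambda>A. k * f A) = rs w d N (ev (liftxs p xs))"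
    by (intro exI[of _ "map (\<lambda>(c, Is). (k * c, Is)) xs"])
      (auto simp: homp_def rs_def liftxs_smult ev_smult fun_eq_iff)
qed

lemma Rel_act:
  assumes g: "g \<in> L" and R: "Rel n f' f"
  shows "Rel n (\<lambda>A. dtop p g ^ n * act w' d' N' (principal_sub p N' g) f' A) (act w d N g f)"
proof -
  let ?g' = "principal_sub p N' g"
  have g': "?g' \<in> L'" unfolding red_L_def using g by blast
  obtain xs where xs: "homp d' N' n xs" "f' = rs w' d' N' (ev xs)" "f = rs w d N (ev (liftxs p xs))"
    using R unfolding Rel_def by blast
  obtain zs where zs: "homp d' N' n zs" "(\<lambda>A. ev xs (mmult N' ?g' A)) = ev zs"
    using pf_comp[of d' N' n "ev xs" ?g'] xs(1) unfolding pf_def by blast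
  define zs2 where "zs2 = map (\<lambda>(c, Is). (dtop p g ^ n * c, Is)) zs"
  have hz2: "homp d' N' n zs2" using zs(1) unfolding zs2_def homp_def by auto
  have e2: "ev zs2 A = dtop p g ^ n * ev zs A" for A unfolding zs2_def by (rule ev_smult)
  have a1: "act w' d' N' ?g' f' = rs w' d' N' (ev zs)"
    unfolding xs(2) act_rs[OF st' g'] zs(2) ..
  have a2: "act w d N g f = rs w d N (\<lambda>A. ev (liftxs p xs) (mmult N g A))"
    unfolding xs(3) by (rule act_rs[OF st g])
  have "rs w d N (\<lambda>A. ev (liftxs p xs) (mmult N g A)) = rs w d N (ev (liftxs p zs2))"
  proof (rule rs_eqI)
    show "poly_fun d N (\<lambda>A. ev (liftxs p xs) (mmult N g A))"
      using poly_fun_comp pf_ev[OF homp_lift[OF xs(1)]] by blast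
    show "poly_fun d N (ev (liftxs p zs2))" using pf_ev[OF homp_lift[OF hz2]] .
  next
    fix B assume "B \<in> orbit_frames w d N"
    then obtain b where b: "b \<in> borel N" "B = fr w d N b" unfolding orbit_fr by blast
    let ?B' = "fr w' d' N' (principal_sub p N' b)"
    have "ev (liftxs p xs) (mmult N g B) = (dtop p g * dtop p b) ^ n * ev xs (mmult N' ?g' ?B')"
      using ev_lift_gorbit[OF st g b(1) xs(1)] b(2) by simp
    also have "\<dots> = (dtop p g * dtop p b) ^ n * ev zs ?B'" using zs(2) by metis
    also have "\<dots> = dtop p b ^ n * ev zs2 ?B'" using e2 by (simp add: power_mult_distrib)
    also have "\<dots> = ev (liftxs p zs2) B" using ev_lift_orbit[OF b(1) hz2] b(2) by simp
    finally show "ev (liftxs p xs) (mmult N g B) = ev (liftxs p zs2) B" .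
  qed
  moreover have "(\<lambda>A. dtop p g ^ n * act w' d' N' ?g' f' A) = rs w' d' N' (ev zs2)"
    unfolding a1 by (auto simp: rs_def e2 fun_eq_iff)
  ultimately show ?thesis unfolding Rel_def using hz2 a2 by auto
qed

end


context lsetup
begin

lemma side1: "side (coord_ring w d N) (act w d N) L (Vn w d N) (sc N) d"
  by (rule side_inst[OF st sc_levi]) (use d1 in auto)

lemma sc'_in: "t \<noteq> 0 \<Longrightarrow> sc N' t \<in> L'"
  unfolding red_L_def using sc_levi psub_sc by (metis image_eqI)

lemma side2: "side (coord_ring w' d' N') (act w' d' N') L' (Vn w' d' N') (sc N') d'"
  by (rule side_inst[OF st' sc'_in d'_pos])

lemma T_add: "f \<in> Vn w' d' N' n \<Longrightarrow> h \<in> Vn w' d' N' n \<Longrightarrow> T n (\<lambda>A. f A + h A) = (\<lambda>A. T n f A + T n h A)"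
  using T_eq Rel_add T_rel by blast

lemma T_smult: "f \<in> Vn w' d' N' n \<Longrightarrow> T n (\<lambda>A. c * f A) = (\<lambda>A. c * T n f A)"
  using T_eq Rel_smult T_rel by blast

lemma T_eqv:
  assumes g: "g \<in> L" and f: "f \<in> Vn w' d' N' n"
  shows "act w d N g (T n f) = (\<lambda>A. dtop p g ^ n * T n (act w' d' N' (principal_sub p N' g) f) A)"
proof -
  have g': "principal_sub p N' g \<in> L'" unfolding red_L_def using g by blast
  have a: "act w' d' N' (principal_sub p N' g) f \<in> Vn w' d' N' n" using side.V_act[OF side2 g' f] .
  have r1: "Rel n (\<lambda>A. dtop p g ^ n * act w' d' N' (principal_sub p N' g) f A) (act w d N g (T n f))"
    by (rule Rel_act[OF g T_rel[OF f]])
  have r2: "Rel n (\<lambda>A. dtop p g ^ n * act w' d' N' (principal_sub p N' g) f A)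
      (\<lambda>A. dtop p g ^ n * T n (act w' d' N' (principal_sub p N' g) f) A)"
    by (rule Rel_smult[OF T_rel[OF a]])
  show ?thesis using Rel_fun[OF r1 r2] .
qed

lemma transfer_inst:
  "transfer (coord_ring w d N) (act w d N) L (Vn w d N) (sc N) d
     (coord_ring w' d' N') (act w' d' N') L' (Vn w' d' N') (sc N') d'
     (principal_sub p N') (dtop p) T"
  apply (rule transfer.intro[OF side1 side2])
  apply (rule transfer_axioms.intro)
  subgoal by (simp add: red_L_def)
  subgoal by (rule chi_nz[OF st])
  subgoal by (rule T_bij)
  subgoal by (rule T_add)
  subgoal by (rule T_smult)
  subgoal by (rule T_eqv)
  done

lemma main: "mult_free w d N L \<longleftrightarrow> mult_free w' d' N' L'"
  unfolding mult_free_gmf using transfer.mf_iff[OF transfer_inst] .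

end

theorem corollary4p5:
  fixes w :: "nat list" and d N :: nat and js :: "nat list"
  assumes "1 \<le> d" and "d < N"
    and "w \<in> Iseq d N"
    and "levi_data N js"
    and "ls_stable w d N (levi N js)"
    and "w \<noteq> [1..<d+1]"
  shows "mult_free w d N (levi N js) \<longleftrightarrow>
         mult_free (red_w w) (red_d w) (red_N w) (red_L w (levi N js))"
proof -
  interpret lsetup w d N js
    by unfold_locales (use assms in auto)
  show ?thesis by (rule main)
qed


end
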